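(* Let $\mathcal Y\subset\mathbb R^d$ be a finite set such that no element of $\mathcal Y$ is a strict convex combination of other elements, let $Y$ be the matrix with columns $y\in\mathcal Y$, $\varepsilon>0$, and $\mathbf Z$ a standard multivariate normal random vector on $\mathbb R^d$. Define $F_{\varepsilon,\Delta}:\mathbb R^{\mathcal Y}\to\mathbb R$ by $$F_{\varepsilon,\Delta}(s)=\mathbb E\big[\max_{y\in\mathcal Y}s(y)+\varepsilon\mathbf Z^\top y\big]=\mathbb E\big[\max_{q\in\Delta^{\mathcal Y}}(s+\varepsilon Y^\top\mathbf Z)^\top q\big].$$ Then: (1) $F_{\varepsilon,\Delta}$ is convex and Lipschitz continuous (in particular proper, l.s.c. and convex). (2) $F_{\varepsilon,\Delta}$ is strictly convex on $V_\Delta$ and affine on $V_\Delta^\perp=\operatorname{span}(\mathbf 1)$; more precisely, for $s=s_{V_\Delta}+s_{V_\Delta^\perp}$ with $s_{V_\Delta}$ the orthogonal projection of $s$ onto $V_\Delta$ and for any $q_0\in\Delta^{\mathcal Y}$, $F_{\varepsilon,\Delta}(s)=\langle s_{V_\Delta^\perp}|q_0\rangle+F_{\varepsilon,\Delta}(s_{V_\Delta})$. (3) $F_{\varepsilon,\Delta}$ is differentiable on $\mathbb R^{\mathcal Y}$ with $\nabla F_{\varepsilon,\Delta}(s)=\mathbb E\big[\operatorname{argmax}_{q\in\Delta^{\mathcal Y}}(s+\varepsilon Y^\top\mathbf Z)^\top q\big]$ (the argmax being almost surely a singleton). (4) The Fenchel conjugate $\Omega_{\varepsilon,\Delta}:=F_{\varepsilon,\Delta}^*$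 has domain $\Delta^{\mathcal Y}$, and its restriction to the affine hull $H_\Delta$ of $\Delta^{\mathcal Y}$ is Legendre-type.
   Context: $\mathbb R^{\mathcal Y}$ is the space of vectors indexed by $\mathcal Y$ with components $s(y)$; $\Delta^{\mathcal Y}=\{q\in\mathbb R^{\mathcal Y}:q\ge0,\sum_yq_y=1\}$; $H_\Delta$ is its affine hull and $V_\Delta=\{v\in\mathbb R^{\mathcal Y}:\sum_yv_y=0\}$ its direction. A function is Legendre-type if it is strictly convex on the interior of its domain and essentially smooth (nonempty interior of the domain, differentiable there, gradient norm tending to $+\infty$ at the boundary of the domain); for a restriction to an affine subspace this is with respect to that subspace's metric. *)

theory Defs
  imports "HOL-Probability.Probability"
begin

definition strictly_convex_on :: "'a::real_vector set \<Rightarrow> ('a \<Rightarrow> real) \<Rightarrow> bool" where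
  "strictly_convex_on S f \<longleftrightarrow> convex S \<and>
     (\<forall>x\<in>S. \<forall>y\<in>S. \<forall>u::real. x \<noteq> y \<and> 0 < u \<and> u < 1 \<longrightarrow>
        f (u *\<^sub>R x + (1 - u) *\<^sub>R y) < u * f x + (1 - u) * f y)"

definition prob_simplex :: "(real ^ 'y::finite) set" where
  "prob_simplex = {q. (\<forall>y. 0 \<le> q $ y) \<and> (\<Sum>y\<in>UNIV. q $ y) = 1}"

definition simplex_hull :: "(real ^ 'y::finite) set" where
  "simplex_hull = {q. (\<Sum>y\<in>UNIV. q $ y) = 1}"

definition simplex_dir :: "(real ^ 'y::finite) set" where
  "simplex_dir = {v. (\<Sum>y\<in>UNIV. v $ y) = 0}"

text \<open>Orthogonal projection of s onto span(1) = V^\<bottom>.\<close>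
definition proj_ones :: "real ^ 'y::finite \<Rightarrow> real ^ 'y" where
  "proj_ones s = ((\<Sum>y\<in>UNIV. s $ y) / real CARD('y)) *\<^sub>R 1"

definition std_gauss :: "('d::finite \<Rightarrow> real) measure" where
  "std_gauss = PiM UNIV (\<lambda>_. density lborel std_normal_density)"

text \<open>Perturbed max: F(s) = E[max_y s(y) + eps Z^T y], points of the set Y given by Y :: 'y => R^d.\<close>
definition Fpert :: "real \<Rightarrow> ('y::finite \<Rightarrow> real ^ 'd::finite) \<Rightarrow> real ^ 'y \<Rightarrow> real" where
  "Fpert eps Y s = (\<integral>z. (MAX y\<in>UNIV. s $ y + eps * ((\<chi> i. z i) \<bullet> Y y)) \<partial>std_gauss)"

definition pert_obj :: "real \<Rightarrow> ('y::finite \<Rightarrow> real ^ 'd::finite) \<Rightarrow> real ^ 'y \<Rightarrow> ('d \<Rightarrow> real) \<Rightarrow> real ^ 'y \<Rightarrow> real" where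
  "pert_obj eps Y s z q = (\<Sum>y\<in>UNIV. (s $ y + eps * ((\<chi> i. z i) \<bullet> Y y)) * q $ y)"

definition fenchel_conj :: "('a::real_inner \<Rightarrow> real) \<Rightarrow> 'a \<Rightarrow> ereal" where
  "fenchel_conj f q = (SUP s. ereal (s \<bullet> q - f s))"

definition interior_rel :: "'a::real_normed_vector set \<Rightarrow> 'a set \<Rightarrow> 'a set" where
  "interior_rel H D = {x\<in>D. \<exists>e>0. ball x e \<inter> H \<subseteq> D}"

definition legendre_on :: "'a::euclidean_space set \<Rightarrow> 'a set \<Rightarrow> ('a \<Rightarrow> ereal) \<Rightarrow> bool" where
  "legendre_on H V f \<longleftrightarrow>
     (let D = {x\<in>H. f x \<noteq> \<infinity>}; I = interior_rel H D in
        I \<noteq> {} \<and> (\<forall>x\<in>I. \<bar>f x\<bar> \<noteq> \<infinity>) \<and>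
        strictly_convex_on I (\<lambda>x. real_of_ereal (f x)) \<and>
        (\<exists>G. (\<forall>x\<in>I. G x \<in> V \<and>
                ((\<lambda>x. real_of_ereal (f x)) has_derivative (\<lambda>h. G x \<bullet> h)) (at x within H)) \<and>
             (\<forall>b\<in>closure I - I. filterlim (\<lambda>x. norm (G x)) at_top (at b within I))))"

end

theory Submission
  imports Defs
begin

abbreviation "NN \<equiv> density lborel std_normal_density"

lemma prob_NN: "prob_space NN" by (rule prob_space_normal_density) simp

lemma prob_G: "prob_space (std_gauss :: ('d::finite \<Rightarrow> real) measure)"
  unfolding std_gauss_def by (rule prob_space_PiM) (rule prob_NN)

lemma sets_G: "sets (std_gauss :: ('d::finite \<Rightarrow> real) measure) = sets (PiM UNIV (\<lambda>_. borel))"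
  unfolding std_gauss_def by (intro sets_PiM_cong) auto

lemma coord_meas[measurable]: "(\<lambda>z. z i) \<in> borel_measurable (std_gauss :: ('d::finite \<Rightarrow> real) measure)"
  by (subst measurable_cong_sets[OF sets_G refl]) (rule measurable_component_singleton, simp)

lemma space_G[simp]: "space (std_gauss :: ('d::finite \<Rightarrow> real) measure) = UNIV"
  unfolding std_gauss_def by (simp add: space_PiM)

lemma distr_G_comp: "distr (std_gauss :: ('d::finite \<Rightarrow> real) measure) NN (\<lambda>z. z i) = NN"
  unfolding std_gauss_def by (rule distr_PiM_component) (auto intro: prob_NN)

lemma integrable_coord: "integrable (std_gauss :: ('d::finite \<Rightarrow> real) measure) (\<lambda>z. z i)"
proof -
  have "integrable NN (\<lambda>x. x)"
    by (subst integrable_density) (auto simp: integrable_std_normal_moment[of 1, simplified])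
  then have "integrable (distr std_gauss NN (\<lambda>z. z i)) (\<lambda>x. x)" by (simp add: distr_G_comp)
  then show ?thesis by (subst (asm) integrable_distr_eq) auto
qed

lemma integral_coord: "(\<integral>z. z i \<partial>(std_gauss :: ('d::finite \<Rightarrow> real) measure)) = 0"
proof -
  have "(\<integral>z. z i \<partial>(std_gauss :: ('d::finite \<Rightarrow> real) measure)) = (\<integral>x. x \<partial>distr std_gauss NN (\<lambda>z. z i))"
    by (subst integral_distr) auto
  also have "\<dots> = (\<integral>x. x \<partial>NN)" by (simp add: distr_G_comp)
  also have "\<dots> = (\<integral>x. std_normal_density x * x \<partial>lborel)"
    by (subst integral_density) auto
  also have "\<dots> = 0" using integral_std_normal_moment_odd[of 0] by simp
  finally show ?thesis .
qed

lemma lin_eq: "(\<chi> i. z i) \<bullet> (a :: real ^ 'd::finite) = (\<Sum>i\<in>UNIV. z i * a $ i)"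
  by (simp add: inner_vec_def)

lemma integrable_lin: "integrable (std_gauss :: ('d::finite \<Rightarrow> real) measure) (\<lambda>z. (\<chi> i. z i) \<bullet> a)"
  unfolding lin_eq by (intro Bochner_Integration.integrable_sum integrable_mult_left integrable_coord)

lemma integral_lin: "(\<integral>z. (\<chi> i. z i) \<bullet> a \<partial>(std_gauss :: ('d::finite \<Rightarrow> real) measure)) = 0"
  unfolding lin_eq
  by (subst Bochner_Integration.integral_sum) (auto intro!: integrable_mult_left integrable_coord simp: integral_coord)

lemma measurable_lin[measurable]: "(\<lambda>z. (\<chi> i. z i) \<bullet> (a::real^'d::finite)) \<in> borel_measurable (std_gauss :: ('d \<Rightarrow> real) measure)"
  unfolding lin_eq by measurable

lemma distributed_coord: "distributed (std_gauss :: ('d::finite \<Rightarrow> real) measure) lborel (\<lambda>z. z i) std_normal_density"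
proof -
  have "distr std_gauss lborel (\<lambda>z. z i) = distr (std_gauss :: ('d::finite \<Rightarrow> real) measure) NN (\<lambda>z. z i)"
    by (rule distr_cong) auto
  then show ?thesis unfolding distributed_def by (simp add: distr_G_comp)
qed

lemma indep_coords: "prob_space.indep_vars (std_gauss :: ('d::finite \<Rightarrow> real) measure) (\<lambda>_. borel) (\<lambda>i z. z i) UNIV"
proof -
  interpret G: prob_space "std_gauss :: ('d \<Rightarrow> real) measure" by (rule prob_G)
  have d: "distr std_gauss borel (\<lambda>z. z i) = NN" for i :: 'd
  proof -
    have "distr std_gauss borel (\<lambda>z. z i) = distr (std_gauss :: ('d::finite \<Rightarrow> real) measure) NN (\<lambda>z. z i)"
      by (rule distr_cong) auto
    then show ?thesis by (simp add: distr_G_comp)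
  qed
  have e: "distr std_gauss (PiM UNIV (\<lambda>i. borel)) (\<lambda>x. x) = (std_gauss :: ('d \<Rightarrow> real) measure)"
    by (rule distr_id2) (simp add: sets_G)
  have f: "(std_gauss :: ('d \<Rightarrow> real) measure) = PiM UNIV (\<lambda>i. NN)" by (simp add: std_gauss_def)
  show ?thesis
    apply (subst G.indep_vars_iff_distr_eq_PiM)
      apply auto[2]
    apply (simp only: d e restrict_UNIV)
    apply (rule f)
    done
qed

lemma hyperplane_sets: "{z. (\<chi> i. z i) \<bullet> (a::real^'d::finite) = c} \<in> sets (std_gauss :: ('d \<Rightarrow> real) measure)"
proof -
  have "{z \<in> space std_gauss. (\<chi> i. z i) \<bullet> (a::real^'d::finite) = c} \<in> sets (std_gauss :: ('d \<Rightarrow> real) measure)"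
    by measurable
  then show ?thesis by simp
qed

lemma hyperplane_null:
  fixes a :: "real^'d::finite"
  assumes "a \<noteq> 0"
  shows "emeasure (std_gauss :: ('d \<Rightarrow> real) measure) {z. (\<chi> i. z i) \<bullet> a = c} = 0"
proof -
  interpret G: prob_space "std_gauss :: ('d \<Rightarrow> real) measure" by (rule prob_G)
  define I where "I = {i. a $ i \<noteq> 0}"
  have I: "I \<noteq> {}" using assms by (auto simp: I_def vec_eq_iff)
  have ind0: "G.indep_vars (\<lambda>_. borel) (\<lambda>i z. a$i * z i) UNIV"
    using G.indep_vars_compose2[OF indep_coords, of "\<lambda>i x. a$i * x" "\<lambda>_. borel"] by simp
  have ind: "G.indep_vars (\<lambda>_. borel) (\<lambda>i z. a$i * z i) I"
    by (rule G.indep_vars_subset[OF ind0]) auto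
  have dist: "distributed std_gauss lborel (\<lambda>z. a$i * z i) (normal_density 0 \<bar>a$i\<bar>)" if "i \<in> I" for i
    using G.normal_density_affine[OF distributed_coord[of i], where \<alpha>="a$i" and \<beta>=0] that by (simp add: I_def)
  have D: "distributed std_gauss lborel (\<lambda>z. \<Sum>i\<in>I. a$i * z i) (normal_density 0 (sqrt (\<Sum>i\<in>I. (\<bar>a$i\<bar>)\<^sup>2)))"
    using G.sum_indep_normal[where \<mu>="\<lambda>_. 0" and \<sigma>="\<lambda>i. \<bar>a$i\<bar>", OF _ I ind _ dist] I by (simp add: I_def)
  have eq: "(\<Sum>i\<in>I. a$i * z i) = (\<chi> i. z i) \<bullet> a" for z
    unfolding lin_eq by (rule sum.mono_neutral_cong_left) (auto simp: I_def)
  have "emeasure std_gauss ((\<lambda>z. \<Sum>i\<in>I. a$i * z i) -` {c} \<inter> space std_gauss) =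
      set_nn_integral lborel {c} (normal_density 0 (sqrt (\<Sum>i\<in>I. (\<bar>a$i\<bar>)\<^sup>2)))"
    by (rule distributed_emeasure[OF D]) auto
  also have "\<dots> = 0" by (rule nn_integral_null_set) auto
  finally show ?thesis by (simp add: eq vimage_def)
qed

lemma interval_pos:
  assumes ab: "a < b" shows "emeasure NN {a<..<b} > 0"
proof -
  have pos: "std_normal_density x > 0" for x by (simp add: normal_density_pos)
  have e: "emeasure NN {a<..<b} = (\<integral>\<^sup>+x. ennreal (std_normal_density x) * indicator {a<..<b} x \<partial>lborel)"
    by (subst emeasure_density) auto
  have "(\<integral>\<^sup>+x. ennreal (std_normal_density x) * indicator {a<..<b} x \<partial>lborel) \<noteq> 0"
  proof
    assume "(\<integral>\<^sup>+x. ennreal (std_normal_density x) * indicator {a<..<b} x \<partial>lborel) = 0"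
    then have "AE x in lborel. ennreal (std_normal_density x) * indicator {a<..<b} x = 0"
      by (subst (asm) nn_integral_0_iff_AE) auto
    then have "AE x in lborel. x \<notin> {a<..<b}"
    proof eventually_elim
      case (elim x) then show ?case using pos[of x] by (cases "x \<in> {a<..<b}") auto
    qed
    then have "{a<..<b} \<in> null_sets lborel" by (subst AE_iff_null_sets) auto
    then show False using ab by (auto simp: emeasure_lborel_Ioo null_sets_def)
  qed
  then show ?thesis by (simp add: e zero_less_iff_neq_zero)
qed

lemma box_pos:
  assumes "r > 0"
  shows "emeasure (std_gauss :: ('d::finite \<Rightarrow> real) measure) {z. \<forall>i. \<bar>z i - c i\<bar> < r} > 0"
proof -
  interpret P: product_prob_space "\<lambda>_::'d. NN"
    unfolding product_prob_space_def product_prob_space_axioms_def product_sigma_finite_def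
    by (auto intro: prob_NN prob_space_imp_sigma_finite)
  have eq: "{z. \<forall>i. \<bar>z i - c i\<bar> < r} = PiE UNIV (\<lambda>i. {c i - r<..<c i + r})"
  proof -
    have *: "x \<in> {c i - r<..<c i + r} \<longleftrightarrow> \<bar>x - c i\<bar> < r" for x i by auto
    show ?thesis unfolding PiE_iff by (auto simp: abs_diff_less_iff)
  qed
  have "emeasure (PiM UNIV (\<lambda>_::'d. NN)) (PiE UNIV (\<lambda>i. {c i - r<..<c i + r})) = (\<Prod>i\<in>UNIV. emeasure NN {c i - r<..<c i + r})"
    by (rule P.emeasure_PiM) auto
  also have "\<dots> > 0"
    using interval_pos[of "c i - r" "c i + r" for i] assms
    by (auto simp: zero_less_iff_neq_zero ennreal_prod_eq_0)
  finally show ?thesis by (simp add: eq std_gauss_def)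
qed

definition th :: "real \<Rightarrow> ('y::finite \<Rightarrow> real^'d::finite) \<Rightarrow> real^'y \<Rightarrow> ('d \<Rightarrow> real) \<Rightarrow> 'y \<Rightarrow> real" where
  "th eps Y s z y = s$y + eps * ((\<chi> i. z i) \<bullet> Y y)"

definition MM :: "real \<Rightarrow> ('y::finite \<Rightarrow> real^'d::finite) \<Rightarrow> real^'y \<Rightarrow> ('d \<Rightarrow> real) \<Rightarrow> real" where
  "MM eps Y s z = (MAX y\<in>UNIV. th eps Y s z y)"

lemma Fpert_MM: "Fpert eps Y s = (\<integral>z. MM eps Y s z \<partial>std_gauss)"
  unfolding Fpert_def MM_def th_def ..

lemma measure_G_UNIV[simp]: "measure (std_gauss :: ('d::finite \<Rightarrow> real) measure) UNIV = 1"
  using prob_space.prob_space[OF prob_G] by simp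

lemma th_meas[measurable]: "(\<lambda>z. th eps Y s z y) \<in> borel_measurable std_gauss"
  unfolding th_def by measurable

lemma MM_meas[measurable]: "MM eps Y s \<in> borel_measurable std_gauss"
  unfolding MM_def by (intro borel_measurable_Max) auto

lemma MM_ge: "th eps Y s z y \<le> MM eps Y s z"
  unfolding MM_def by (rule Max_ge) auto

lemma MM_ex: "\<exists>y. MM eps Y s z = th eps Y s z y"
proof -
  have "MM eps Y s z \<in> (\<lambda>y. th eps Y s z y) ` UNIV" unfolding MM_def by (rule Max_in) auto
  then show ?thesis by auto
qed

lemma MM_le_iff: "MM eps Y s z \<le> c \<longleftrightarrow> (\<forall>y. th eps Y s z y \<le> c)"
  unfolding MM_def by (subst Max_le_iff) auto

lemma integrable_th: "integrable std_gauss (\<lambda>z. th eps Y s z y)"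
proof -
  interpret G: prob_space "std_gauss :: ('d::finite \<Rightarrow> real) measure" by (rule prob_G)
  show ?thesis unfolding th_def by (intro Bochner_Integration.integrable_add integrable_mult_right integrable_lin) auto
qed

lemma integral_th: "(\<integral>z. th eps Y s z y \<partial>std_gauss) = s $ y"
proof -
  interpret G: prob_space "std_gauss :: ('d::finite \<Rightarrow> real) measure" by (rule prob_G)
  show ?thesis unfolding th_def
    by (subst Bochner_Integration.integral_add) (auto intro!: integrable_mult_right integrable_lin simp: integral_lin)
qed

lemma integrable_MM: "integrable std_gauss (MM eps Y s)"
proof -
  have A: "integrable std_gauss (\<lambda>z. \<Sum>y\<in>UNIV. \<bar>th eps Y s z y\<bar>)"
    by (intro Bochner_Integration.integrable_sum integrable_abs integrable_th)
  have B: "AE z in std_gauss. norm (MM eps Y s z) \<le> norm (\<Sum>y\<in>UNIV. \<bar>th eps Y s z y\<bar>)"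
  proof (rule AE_I2)
    fix z
    obtain y where y: "MM eps Y s z = th eps Y s z y" using MM_ex by blast
    have "\<bar>th eps Y s z y\<bar> \<le> (\<Sum>y\<in>UNIV. \<bar>th eps Y s z y\<bar>)"
      by (rule member_le_sum) auto
    then show "norm (MM eps Y s z) \<le> norm (\<Sum>y\<in>UNIV. \<bar>th eps Y s z y\<bar>)"
      by (simp add: y sum_nonneg)
  qed
  show ?thesis by (rule Bochner_Integration.integrable_bound[OF A _ B]) simp
qed

lemma MM_lip: "\<bar>MM eps Y s z - MM eps Y s' z\<bar> \<le> norm (s - s')"
proof -
  have a: "MM eps Y s z \<le> MM eps Y s' z + norm (s - s')" for s s'
  proof -
    obtain y where y: "MM eps Y s z = th eps Y s z y" using MM_ex by blast
    have "\<bar>(s - s') $ y\<bar> \<le> norm (s - s')" by (rule component_le_norm_cart)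
    then have "th eps Y s z y \<le> th eps Y s' z y + norm (s - s')" by (simp add: th_def)
    also have "\<dots> \<le> MM eps Y s' z + norm (s - s')" using MM_ge by simp
    finally show ?thesis by (simp add: y)
  qed
  show ?thesis using a[of s s'] a[of s' s] by (simp add: norm_minus_commute)
qed

lemma MM_conv:
  assumes "0 \<le> u" "u \<le> 1"
  shows "MM eps Y (u *\<^sub>R s + (1 - u) *\<^sub>R s') z \<le> u * MM eps Y s z + (1 - u) * MM eps Y s' z"
proof -
  obtain y where y: "MM eps Y (u *\<^sub>R s + (1 - u) *\<^sub>R s') z = th eps Y (u *\<^sub>R s + (1 - u) *\<^sub>R s') z y" using MM_ex by blast
  have "th eps Y (u *\<^sub>R s + (1 - u) *\<^sub>R s') z y = u * th eps Y s z y + (1 - u) * th eps Y s' z y"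
    by (simp add: th_def algebra_simps)
  also have "\<dots> \<le> u * MM eps Y s z + (1 - u) * MM eps Y s' z"
    using assms MM_ge by (intro add_mono mult_left_mono) auto
  finally show ?thesis by (simp add: y)
qed

lemma MM_shift: "MM eps Y (s + c *\<^sub>R 1) z = MM eps Y s z + c"
proof -
  have "MM eps Y (s + c *\<^sub>R 1) z = (MAX y\<in>UNIV. th eps Y s z y + c)"
    unfolding MM_def by (simp add: th_def algebra_simps)
  also have "\<dots> = MM eps Y s z + c" unfolding MM_def by (rule Max_add_commute) auto
  finally show ?thesis .
qed
lemma F_lip:
  fixes Y :: "'y::finite \<Rightarrow> real^'d::finite"
  shows "\<bar>Fpert eps Y s - Fpert eps Y s'\<bar> \<le> norm (s - s')"
proof -
  interpret G: prob_space "std_gauss :: ('d \<Rightarrow> real) measure" by (rule prob_G)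
  have "\<bar>Fpert eps Y s - Fpert eps Y s'\<bar> = \<bar>\<integral>z. MM eps Y s z - MM eps Y s' z \<partial>std_gauss\<bar>"
    unfolding Fpert_MM by (subst Bochner_Integration.integral_diff) (auto intro: integrable_MM)
  also have "\<dots> \<le> (\<integral>z. \<bar>MM eps Y s z - MM eps Y s' z\<bar> \<partial>std_gauss)"
    by (rule integral_abs_bound)
  also have "\<dots> \<le> (\<integral>z. norm (s - s') \<partial>(std_gauss :: ('d \<Rightarrow> real) measure))"
    apply (rule Bochner_Integration.integral_mono)
    using MM_lip by (auto intro!: integrable_abs Bochner_Integration.integrable_diff integrable_MM)
  also have "\<dots> = norm (s - s')" by simp
  finally show ?thesis .
qed


lemma F_conv:
  fixes Y :: "'y::finite \<Rightarrow> real^'d::finite"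
  shows "convex_on UNIV (Fpert eps Y)"
  unfolding convex_on_alt
proof (intro conjI ballI allI impI)
  interpret G: prob_space "std_gauss :: ('d::finite \<Rightarrow> real) measure" by (rule prob_G)
  fix s s' :: "real^'y" and u :: real assume u: "0 \<le> u \<and> u \<le> 1"
  have "Fpert eps Y (u *\<^sub>R s + (1 - u) *\<^sub>R s') \<le> (\<integral>z. u * MM eps Y s z + (1 - u) * MM eps Y s' z \<partial>std_gauss)"
    unfolding Fpert_MM
    by (rule Bochner_Integration.integral_mono) (use u in \<open>auto intro!: integrable_MM MM_conv Bochner_Integration.integrable_add integrable_mult_right\<close>)
  also have "\<dots> = u * Fpert eps Y s + (1 - u) * Fpert eps Y s'"
    unfolding Fpert_MM by (subst Bochner_Integration.integral_add) (auto intro!: integrable_MM integrable_mult_right)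
  finally show "Fpert eps Y (u *\<^sub>R s + (1 - u) *\<^sub>R s') \<le> u * Fpert eps Y s + (1 - u) * Fpert eps Y s'" .
qed auto

lemma F_shift: "Fpert eps Y (s + c *\<^sub>R 1) = Fpert eps Y s + c"
proof -
  interpret G: prob_space "std_gauss :: ('d::finite \<Rightarrow> real) measure" by (rule prob_G)
  show ?thesis unfolding Fpert_MM MM_shift
    by (subst Bochner_Integration.integral_add) (auto intro!: integrable_MM)
qed

lemma F_ge_lin:
  assumes q: "q \<in> prob_simplex"
  shows "s \<bullet> q \<le> Fpert eps Y s"
proof -
  interpret G: prob_space "std_gauss :: ('d::finite \<Rightarrow> real) measure" by (rule prob_G)
  have q0: "\<And>y. 0 \<le> q $ y" and q1: "(\<Sum>y\<in>UNIV. q $ y) = 1" using q by (auto simp: prob_simplex_def)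
  have "s \<bullet> q = (\<Sum>y\<in>UNIV. q $ y * (\<integral>z. th eps Y s z y \<partial>std_gauss))"
    by (simp add: integral_th inner_vec_def mult.commute)
  also have "\<dots> = (\<integral>z. (\<Sum>y\<in>UNIV. q $ y * th eps Y s z y) \<partial>std_gauss)"
    by (subst Bochner_Integration.integral_sum) (auto intro!: integrable_mult_right integrable_th)
  also have "\<dots> \<le> (\<integral>z. MM eps Y s z \<partial>std_gauss)"
  proof (rule Bochner_Integration.integral_mono)
    fix z
    have "(\<Sum>y\<in>UNIV. q $ y * th eps Y s z y) \<le> (\<Sum>y\<in>UNIV. q $ y * MM eps Y s z)"
      by (intro sum_mono mult_left_mono MM_ge q0)
    also have "\<dots> = MM eps Y s z" by (simp add: sum_distrib_right[symmetric] q1)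
    finally show "(\<Sum>y\<in>UNIV. q $ y * th eps Y s z y) \<le> MM eps Y s z" .
  qed (auto intro!: integrable_MM Bochner_Integration.integrable_sum integrable_mult_right integrable_th)
  finally show ?thesis by (simp add: Fpert_MM)
qed

lemma F_mono:
  assumes "\<And>y. s $ y \<le> s' $ y"
  shows "Fpert eps Y s \<le> Fpert eps Y s'"
  unfolding Fpert_MM
proof (rule Bochner_Integration.integral_mono)
  fix z show "MM eps Y s z \<le> MM eps Y s' z"
    unfolding MM_le_iff using assms MM_ge[of eps Y s' z] by (smt (verit) th_def)
qed (auto intro: integrable_MM)


lemma F_lipschitz:
  fixes Y :: "'y::finite \<Rightarrow> real^'d::finite"
  shows "1-lipschitz_on UNIV (Fpert eps Y)"
  unfolding lipschitz_on_def using F_lip[of eps Y] by (simp add: dist_real_def dist_norm)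

lemma F_const: "Fpert eps Y (c *\<^sub>R 1) = Fpert eps Y 0 + c"
  using F_shift[of eps Y 0 c] by simp

lemma F_affine_span:
  fixes Y :: "'y::finite \<Rightarrow> real^'d::finite"
  shows "\<forall>x\<in>span {1}. \<forall>x'\<in>span {1}. \<forall>u::real.
         Fpert eps Y (u *\<^sub>R x + (1 - u) *\<^sub>R x') = u * Fpert eps Y x + (1 - u) * Fpert eps Y x'"
proof (intro ballI allI)
  fix x x' :: "real^'y" and u :: real
  assume "x \<in> span {1}" "x' \<in> span {1}"
  then obtain a b where x: "x = a *\<^sub>R 1" and x': "x' = b *\<^sub>R 1" by (auto simp: span_singleton)
  have "u *\<^sub>R x + (1 - u) *\<^sub>R x' = (u * a + (1 - u) * b) *\<^sub>R 1" by (simp add: x x' algebra_simps)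
  then show "Fpert eps Y (u *\<^sub>R x + (1 - u) *\<^sub>R x') = u * Fpert eps Y x + (1 - u) * Fpert eps Y x'"
    by (simp only: F_const x x') (simp add: algebra_simps)
qed

lemma inner_one_vec: "(1 :: real^'y::finite) \<bullet> q = (\<Sum>y\<in>UNIV. q $ y)"
  by (simp add: inner_vec_def)

lemma F_proj:
  fixes Y :: "'y::finite \<Rightarrow> real^'d::finite"
  assumes "q0 \<in> prob_simplex"
  shows "Fpert eps Y s = (proj_ones s) \<bullet> q0 + Fpert eps Y (s - proj_ones s)"
proof -
  define m where "m = (\<Sum>y\<in>UNIV. s $ y) / real CARD('y)"
  have p: "proj_ones s = m *\<^sub>R 1" by (simp add: proj_ones_def m_def)
  have "Fpert eps Y s = Fpert eps Y ((s - proj_ones s) + m *\<^sub>R 1)" by (simp add: p)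
  also have "\<dots> = Fpert eps Y (s - proj_ones s) + m" by (rule F_shift)
  also have "m = proj_ones s \<bullet> q0" using assms by (simp add: p inner_one_vec prob_simplex_def)
  finally show ?thesis by simp
qed

locale pm =
  fixes Y :: "'y::finite \<Rightarrow> real^'d::finite" and eps :: real
  assumes no_conv: "\<And>y. Y y \<notin> convex hull (Y ` (UNIV - {y}))"
    and eps_pos: "eps > 0"
begin

abbreviation G :: "('d \<Rightarrow> real) measure" where "G \<equiv> std_gauss"
abbreviation F :: "real^'y \<Rightarrow> real" where "F \<equiv> Fpert eps Y"
abbreviation TH where "TH \<equiv> th eps Y"
abbreviation M where "M \<equiv> MM eps Y"

lemma Gprob: "prob_space G" by (rule prob_G)

lemma Y_inj: "y \<noteq> y' \<Longrightarrow> Y y \<noteq> Y y'"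
  using no_conv[of y] hull_inc[of "Y y'" "Y ` (UNIV - {y})" convex] by auto

lemma tie_null:
  assumes "y \<noteq> y'"
  shows "AE z in G. TH s z y \<noteq> TH s z y'"
proof (rule AE_I')
  let ?a = "eps *\<^sub>R (Y y - Y y')"
  have a: "?a \<noteq> 0" using Y_inj[OF assms] eps_pos by auto
  show "{z. (\<chi> i. z i) \<bullet> ?a = s$y' - s$y} \<in> null_sets G"
    by (rule null_setsI[OF hyperplane_null[OF a] hyperplane_sets])
  show "{z \<in> space G. \<not> TH s z y \<noteq> TH s z y'} \<subseteq> {z. (\<chi> i. z i) \<bullet> ?a = s$y' - s$y}"
    by (auto simp: th_def inner_diff_right algebra_simps)
qed

lemma AE_distinct: "AE z in G. \<forall>y y'. y \<noteq> y' \<longrightarrow> TH s z y \<noteq> TH s z y'"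
proof -
  have "AE z in G. \<forall>p\<in>UNIV. fst p \<noteq> snd p \<longrightarrow> TH s z (fst p) \<noteq> TH s z (snd p)"
    by (rule AE_finite_allI) (auto intro: tie_null)
  then show ?thesis by (rule eventually_mono) auto
qed

definition Am :: "real^'y \<Rightarrow> ('d \<Rightarrow> real) \<Rightarrow> 'y set" where
  "Am s z = {y. TH s z y = M s z}"

definition PP :: "'y set \<Rightarrow> real^'y \<Rightarrow> bool" where
  "PP T q \<longleftrightarrow> q \<in> prob_simplex \<and> (\<forall>y. q $ y \<noteq> 0 \<longrightarrow> y \<in> T)"

definition HH :: "'y set \<Rightarrow> real^'y" where "HH T = (THE q. PP T q)"

definition Q :: "real^'y \<Rightarrow> ('d \<Rightarrow> real) \<Rightarrow> real^'y" where
  "Q s z = (THE q. q \<in> prob_simplex \<and>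
                     (\<forall>q'\<in>prob_simplex. pert_obj eps Y s z q' \<le> pert_obj eps Y s z q))"

lemma obj_eq: "pert_obj eps Y s z q = (\<Sum>y\<in>UNIV. TH s z y * q $ y)"
  unfolding pert_obj_def th_def ..

lemma obj_le: "q \<in> prob_simplex \<Longrightarrow> pert_obj eps Y s z q \<le> M s z"
  using F_ge_lin[of q]
proof -
  assume q: "q \<in> prob_simplex"
  have q0: "\<And>y. 0 \<le> q $ y" and q1: "(\<Sum>y\<in>UNIV. q $ y) = 1" using q by (auto simp: prob_simplex_def)
  have "(\<Sum>y\<in>UNIV. TH s z y * q $ y) \<le> (\<Sum>y\<in>UNIV. M s z * q $ y)"
    by (intro sum_mono mult_right_mono MM_ge q0)
  also have "\<dots> = M s z * (\<Sum>y\<in>UNIV. q $ y)" by (rule sum_distrib_left[symmetric])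
  finally show ?thesis by (simp add: obj_eq q1)
qed

lemma axis_simplex: "axis y 1 \<in> prob_simplex"
  by (auto simp: prob_simplex_def axis_def)

lemma obj_axis: "pert_obj eps Y s z (axis y 1) = TH s z y"
  by (simp add: obj_eq axis_def if_distrib cong: if_cong)

lemma obj_eq_M_iff:
  assumes q: "q \<in> prob_simplex"
  shows "pert_obj eps Y s z q = M s z \<longleftrightarrow> (\<forall>y. q $ y \<noteq> 0 \<longrightarrow> y \<in> Am s z)"
proof -
  have q0: "\<And>y. 0 \<le> q $ y" and q1: "(\<Sum>y\<in>UNIV. q $ y) = 1" using q by (auto simp: prob_simplex_def)
  have "M s z - pert_obj eps Y s z q = (\<Sum>y\<in>UNIV. (M s z - TH s z y) * q $ y)"
  proof -
    have "(\<Sum>y\<in>UNIV. (M s z - TH s z y) * q $ y) = (\<Sum>y\<in>UNIV. M s z * q $ y) - (\<Sum>y\<in>UNIV. TH s z y * q $ y)"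
      by (simp add: left_diff_distrib sum_subtractf)
    also have "(\<Sum>y\<in>UNIV. M s z * q $ y) = M s z * (\<Sum>y\<in>UNIV. q $ y)" by (rule sum_distrib_left[symmetric])
    finally show ?thesis by (simp add: obj_eq q1)
  qed
  moreover have nn: "\<And>y. 0 \<le> (M s z - TH s z y) * q $ y"
    using MM_ge[of eps Y s z] q0 by (simp add: mult_nonneg_nonneg)
  ultimately have e1: "pert_obj eps Y s z q = M s z \<longleftrightarrow> (\<Sum>y\<in>UNIV. (M s z - TH s z y) * q $ y) = 0"
    by linarith
  have "(\<Sum>y\<in>UNIV. (M s z - TH s z y) * q $ y) = 0 \<longleftrightarrow> (\<forall>y\<in>UNIV. (M s z - TH s z y) * q $ y = 0)"
    by (rule sum_nonneg_eq_0_iff) (auto simp: nn)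
  then have "pert_obj eps Y s z q = M s z \<longleftrightarrow> (\<forall>y. (M s z - TH s z y) * q $ y = 0)"
    using e1 by simp
  also have "\<dots> \<longleftrightarrow> (\<forall>y. q $ y \<noteq> 0 \<longrightarrow> y \<in> Am s z)"
    by (auto simp: Am_def) metis
  finally show ?thesis .
qed

lemma maxi_iff:
  "(q \<in> prob_simplex \<and> (\<forall>q'\<in>prob_simplex. pert_obj eps Y s z q' \<le> pert_obj eps Y s z q))
    \<longleftrightarrow> PP (Am s z) q"
proof
  assume a: "q \<in> prob_simplex \<and> (\<forall>q'\<in>prob_simplex. pert_obj eps Y s z q' \<le> pert_obj eps Y s z q)"
  obtain y where y: "M s z = TH s z y" using MM_ex by blast
  have "M s z \<le> pert_obj eps Y s z q" using a axis_simplex[of y] obj_axis[of s z y] y by metis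
  then have "pert_obj eps Y s z q = M s z" using obj_le a by (meson antisym)
  then show "PP (Am s z) q" using a obj_eq_M_iff unfolding PP_def by blast
next
  assume "PP (Am s z) q"
  then have q: "q \<in> prob_simplex" and "pert_obj eps Y s z q = M s z" using obj_eq_M_iff unfolding PP_def by blast+
  then show "q \<in> prob_simplex \<and> (\<forall>q'\<in>prob_simplex. pert_obj eps Y s z q' \<le> pert_obj eps Y s z q)"
    using obj_le by auto
qed

lemma Q_HH: "Q s z = HH (Am s z)"
  unfolding Q_def HH_def maxi_iff ..

lemma PP_single: "PP {y} q \<longleftrightarrow> q = axis y 1"
proof
  assume a: "PP {y} q"
  then have q1: "(\<Sum>i\<in>UNIV. q $ i) = 1" and z: "\<And>i. i \<noteq> y \<Longrightarrow> q $ i = 0"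
    by (auto simp: PP_def prob_simplex_def)
  have "(\<Sum>i\<in>UNIV. q $ i) = q $ y" using z by (subst sum.remove[of _ y]) auto
  then have "q $ y = 1" using q1 by simp
  then show "q = axis y 1" using z by (auto simp: vec_eq_iff axis_def)
next
  assume "q = axis y 1" then show "PP {y} q" using axis_simplex by (auto simp: PP_def axis_def)
qed

lemma HH_single: "HH {y} = axis y 1"
  unfolding HH_def PP_single by simp

lemma Am_single:
  assumes "\<forall>y y'. y \<noteq> y' \<longrightarrow> TH s z y \<noteq> TH s z y'"
  obtains y where "Am s z = {y}"
proof -
  obtain y where y: "M s z = TH s z y" using MM_ex by blast
  have "Am s z = {y}" using assms y by (auto simp: Am_def)
  then show ?thesis using that by blast
qed

lemma uniq_AE: "AE z in G. \<exists>!q. q \<in> prob_simplex \<and>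
              (\<forall>q'\<in>prob_simplex. pert_obj eps Y s z q' \<le> pert_obj eps Y s z q)"
  using AE_distinct[of s]
proof eventually_elim
  case (elim z)
  obtain y where "Am s z = {y}" using Am_single[OF elim] by blast
  then show ?case by (simp add: maxi_iff PP_single)
qed

lemma Q_AE: "AE z in G. \<exists>y. Am s z = {y} \<and> Q s z = axis y 1"
  using AE_distinct[of s]
proof eventually_elim
  case (elim z)
  obtain y where "Am s z = {y}" using Am_single[OF elim] by blast
  then show ?case by (auto simp: Q_HH HH_single)
qed

lemma Am_meas: "Am s \<in> G \<rightarrow>\<^sub>M count_space UNIV"
proof (subst measurable_count_space_eq2)
  show "finite (UNIV :: 'y set set)" by simp
  have "Am s -` {T} \<inter> space G = {z \<in> space G. (\<forall>y\<in>T. TH s z y - M s z = 0) \<and> (\<forall>y\<in>-T. TH s z y - M s z \<noteq> 0)}" for T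
    by (auto simp: Am_def)
  moreover have "{z \<in> space G. (\<forall>y\<in>T. TH s z y - M s z = 0) \<and> (\<forall>y\<in>-T. TH s z y - M s z \<noteq> 0)} \<in> sets G" for T
    by measurable
  ultimately show "Am s \<in> space G \<rightarrow> UNIV \<and> (\<forall>a\<in>UNIV. Am s -` {a} \<inter> space G \<in> sets G)" by auto
qed

lemma Q_meas[measurable]: "Q s \<in> borel_measurable G"
proof -
  have "(\<lambda>z. HH (Am s z)) \<in> borel_measurable G"
    by (rule measurable_compose[OF Am_meas]) (simp add: measurable_count_space_eq1)
  then show ?thesis by (simp add: Q_HH[abs_def])
qed

lemma Q_bound: "norm (Q s z) \<le> Max (range (\<lambda>T. norm (HH T)))"
  unfolding Q_HH by (rule Max_ge) auto

lemma integrable_Q: "integrable G (Q s)"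
proof -
  interpret G: prob_space G by (rule Gprob)
  show ?thesis by (rule G.integrable_const_bound[OF AE_I2[OF Q_bound]]) simp
qed


definition gap :: "real^'y \<Rightarrow> ('d \<Rightarrow> real) \<Rightarrow> real" where
  "gap s z = (MIN p\<in>UNIV. (if fst p = snd p then 1 else \<bar>TH s z (fst p) - TH s z (snd p)\<bar>))"

lemma gap_meas[measurable]: "gap s \<in> borel_measurable G"
  unfolding gap_def by (intro borel_measurable_Min) auto

lemma gap_le: "y \<noteq> y' \<Longrightarrow> gap s z \<le> \<bar>TH s z y - TH s z y'\<bar>"
proof -
  assume "y \<noteq> y'"
  then have "\<bar>TH s z y - TH s z y'\<bar> = (\<lambda>p. if fst p = snd p then 1 else \<bar>TH s z (fst p) - TH s z (snd p)\<bar>) (y, y')"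
    by simp
  also have "\<dots> \<in> range (\<lambda>p. if fst p = snd p then 1 else \<bar>TH s z (fst p) - TH s z (snd p)\<bar>)" by (rule rangeI)
  finally show ?thesis unfolding gap_def by (intro Min_le) auto
qed

lemma gap_pos_AE: "AE z in G. 0 < gap s z"
  using AE_distinct[of s]
proof eventually_elim
  case (elim z) then show ?case unfolding gap_def by (subst Min_gr_iff) auto
qed

lemma th_add: "TH (s + k) z y = TH s z y + k $ y"
  by (simp add: th_def)

lemma M_local:
  assumes g: "0 < gap s z" and A: "Am s z = {y}" and k: "2 * norm k < gap s z"
  shows "M (s + k) z = M s z + k $ y"
proof -
  have My: "M s z = TH s z y" using A by (auto simp: Am_def)
  have "TH (s + k) z y' \<le> TH (s + k) z y" for y'
  proof (cases "y' = y")
    case False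
    have "TH s z y' \<le> TH s z y" using MM_ge[of eps Y s z y'] My by simp
    moreover have "gap s z \<le> \<bar>TH s z y - TH s z y'\<bar>" using gap_le False by metis
    moreover have "\<bar>k $ y'\<bar> \<le> norm k" "\<bar>k $ y\<bar> \<le> norm k" by (auto intro: component_le_norm_cart)
    ultimately show ?thesis using k by (simp add: th_add)
  qed simp
  then have "M (s + k) z = TH (s + k) z y" using MM_ge[of eps Y "s + k" z y] MM_le_iff by (metis antisym)
  then show ?thesis by (simp add: th_add My)
qed

lemma R_bound_AE:
  "AE z in G. \<bar>M (s + k) z - M s z - Q s z \<bullet> k\<bar> \<le> 2 * norm k * indicator {z. gap s z \<le> 2 * norm k} z"
  using gap_pos_AE[of s] Q_AE[of s]
proof eventually_elim
  case (elim z)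
  then obtain y where A: "Am s z = {y}" and Qz: "Q s z = axis y 1" by blast
  have Qk: "Q s z \<bullet> k = k $ y" by (simp add: Qz inner_axis')
  show ?case
  proof (cases "gap s z \<le> 2 * norm k")
    case True
    have "\<bar>M (s + k) z - M s z\<bar> \<le> norm k" using MM_lip[of eps Y "s + k" z s] by simp
    moreover have "\<bar>k $ y\<bar> \<le> norm k" by (rule component_le_norm_cart)
    ultimately show ?thesis using True by (simp add: Qk)
  next
    case False
    then show ?thesis using M_local[OF elim(1) A] by (simp add: Qk)
  qed
qed

lemma gap_small:
  assumes e: "0 < e"
  shows "\<exists>d>0. \<forall>t. t < d \<longrightarrow> measure G {z. gap s z \<le> t} < e"
proof -
  interpret G: prob_space G by (rule Gprob)
  define A where "A n = {z. gap s z \<le> 1 / Suc n}" for n :: nat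
  have Asets: "range A \<subseteq> sets G"
  proof -
    have "{z \<in> space G. gap s z \<le> 1 / Suc n} \<in> sets G" for n by measurable
    then show ?thesis by (auto simp: A_def)
  qed
  have dec: "antimono_on UNIV A"
  proof -
    have "1 / real (Suc y) \<le> 1 / real (Suc x)" if "x \<le> y" for x y :: nat
      using that by (rule_tac divide_left_mono) auto
    then have "A y \<subseteq> A x" if "x \<le> y" for x y
      using that unfolding A_def by (auto simp del: of_nat_Suc) (meson order_trans)
    then show ?thesis unfolding monotone_on_def by auto
  qed
  have L: "(\<lambda>n. measure G (A n)) \<longlonglongrightarrow> measure G (\<Inter> (range A))"
    by (rule G.finite_Lim_measure_decseq[OF Asets dec])
  have I: "\<Inter> (range A) = {z. gap s z \<le> 0}"
  proof safe
    fix z assume "z \<in> \<Inter> (range A)"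
    then have "\<forall>n. gap s z \<le> 1 / Suc n" by (auto simp: A_def)
    then have all: "gap s z \<le> 1 / Suc n" for n by blast
    show "gap s z \<le> 0"
    proof (rule ccontr)
      assume "\<not> gap s z \<le> 0" then have "0 < gap s z" by simp
      from reals_Archimedean[OF this] obtain n where "inverse (real (Suc n)) < gap s z" ..
      with all[of n] show False by (simp add: inverse_eq_divide)
    qed
  next
    fix z n assume "gap s z \<le> 0" then show "z \<in> A n" by (auto simp: A_def intro: order_trans)
  qed
  have Nset: "{z \<in> space G. \<not> 0 < gap s z} \<in> sets G" by measurable
  have "emeasure G {z \<in> space G. \<not> 0 < gap s z} = 0"
    using gap_pos_AE[of s] AE_iff_measurable[OF Nset refl] by simp
  then have "measure G {z. gap s z \<le> 0} = 0" by (simp add: measure_def not_less)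
  then have "(\<lambda>n. measure G (A n)) \<longlonglongrightarrow> 0" using L I by simp
  from order_tendstoD(2)[OF this e] obtain n where n: "measure G (A n) < e"
    unfolding eventually_sequentially by blast
  show ?thesis
  proof (intro exI[of _ "1 / Suc n"] conjI allI impI)
    fix t assume t: "t < 1 / Suc n"
    have "measure G {z. gap s z \<le> t} \<le> measure G (A n)"
      by (rule G.finite_measure_mono) (use t Asets in \<open>auto simp: A_def\<close>)
    then show "measure G {z. gap s z \<le> t} < e" using n by simp
  qed simp
qed

lemma F_deriv:
  "(F has_derivative (\<lambda>h. (\<integral>z. Q s z \<partial>G) \<bullet> h)) (at s)"
proof -
  interpret G: prob_space G by (rule Gprob)
  let ?D = "\<integral>z. Q s z \<partial>G"
  have key: "\<bar>F (s + k) - F s - ?D \<bullet> k\<bar> \<le> 2 * norm k * measure G {z. gap s z \<le> 2 * norm k}" for k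
  proof -
    have Dk: "?D \<bullet> k = (\<integral>z. Q s z \<bullet> k \<partial>G)"
      by (rule integral_inner_left[symmetric]) (rule integrable_Q)
    have "F (s + k) - F s - ?D \<bullet> k = (\<integral>z. M (s + k) z - M s z - Q s z \<bullet> k \<partial>G)"
      unfolding Dk Fpert_MM
      by (subst Bochner_Integration.integral_diff, (auto intro!: Bochner_Integration.integrable_diff integrable_MM integrable_inner_left integrable_Q)[2])
         (subst Bochner_Integration.integral_diff, (auto intro!: integrable_MM)[2], simp)
    also have "\<bar>\<dots>\<bar> \<le> (\<integral>z. \<bar>M (s + k) z - M s z - Q s z \<bullet> k\<bar> \<partial>G)"
      by (rule integral_abs_bound)
    also have "\<dots> \<le> (\<integral>z. 2 * norm k * indicator {z. gap s z \<le> 2 * norm k} z \<partial>G)"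
    proof (rule integral_mono_AE[OF _ _ R_bound_AE])
      show "integrable G (\<lambda>z. \<bar>M (s + k) z - M s z - Q s z \<bullet> k\<bar>)"
        by (auto intro!: integrable_abs Bochner_Integration.integrable_diff integrable_MM integrable_inner_left integrable_Q)
      have "{z \<in> space G. gap s z \<le> 2 * norm k} \<in> sets G" by measurable
      then show "integrable G (\<lambda>z. 2 * norm k * indicator {z. gap s z \<le> 2 * norm k} z)"
        by (intro integrable_mult_right integrable_real_indicator) (auto simp: G.emeasure_eq_measure)
    qed
    also have "\<dots> = 2 * norm k * measure G {z. gap s z \<le> 2 * norm k}"
    proof -
      have "{z \<in> space G. gap s z \<le> 2 * norm k} \<in> sets G" by measurable
      then show ?thesis by simp
    qed
    finally show ?thesis .
  qed
  show ?thesis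
    unfolding has_derivative_iff_norm
  proof (intro conjI bounded_linear_inner_right)
    show "((\<lambda>y. norm (F y - F s - ?D \<bullet> (y - s)) / norm (y - s)) \<longlongrightarrow> 0) (at s)"
      unfolding Lim_at
    proof (intro allI impI)
      fix e :: real assume e: "0 < e"
      obtain d where d: "d > 0" and hd: "\<And>t. t < d \<Longrightarrow> measure G {z. gap s z \<le> t} < e / 2"
        using gap_small[of "e / 2"] e by auto
      show "\<exists>d>0. \<forall>x. 0 < dist x s \<and> dist x s < d \<longrightarrow> dist (norm (F x - F s - ?D \<bullet> (x - s)) / norm (x - s)) 0 < e"
      proof (intro exI[of _ "d / 2"] conjI allI impI)
        fix x assume x: "0 < dist x s \<and> dist x s < d / 2"
        define k where "k = x - s"
        have nk: "0 < norm k" "2 * norm k < d" using x by (auto simp: k_def dist_norm)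
        have "\<bar>F (s + k) - F s - ?D \<bullet> k\<bar> \<le> 2 * norm k * measure G {z. gap s z \<le> 2 * norm k}" by (rule key)
        also have "\<dots> < 2 * norm k * (e / 2)" using hd[OF nk(2)] nk(1) by simp
        finally have "\<bar>F (s + k) - F s - ?D \<bullet> k\<bar> / norm k < e" using nk(1) by (simp add: divide_less_eq mult.commute)
        then show "dist (norm (F x - F s - ?D \<bullet> (x - s)) / norm (x - s)) 0 < e"
          by (simp add: k_def)
      qed (use d in simp)
    qed
  qed
qed

end

lemma Max_diff_le:
  fixes f g :: "'a \<Rightarrow> real"
  assumes "finite A" "A \<noteq> {}" "\<And>x. x \<in> A \<Longrightarrow> \<bar>f x - g x\<bar> \<le> d"
  shows "\<bar>(MAX x\<in>A. f x) - (MAX x\<in>A. g x)\<bar> \<le> d"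
proof -
  have a: "(MAX x\<in>A. f x) \<le> (MAX x\<in>A. g x) + d" if "\<And>x. x \<in> A \<Longrightarrow> \<bar>f x - g x\<bar> \<le> d" for f g :: "'a \<Rightarrow> real"
  proof -
    have "(MAX x\<in>A. f x) \<in> f ` A" using assms(1,2) by (intro Max_in) auto
    then obtain x where x: "x \<in> A" "(MAX x\<in>A. f x) = f x" by auto
    have "g x \<le> (MAX x\<in>A. g x)" using x assms(1) by (intro Max_ge) auto
    then show ?thesis using that[OF x(1)] x(2) by linarith
  qed
  show ?thesis using a[of f g] a[of g f] assms(3) by (force simp: abs_minus_commute)
qed

context pm
begin

definition CY :: real where "CY = (\<Sum>k\<in>UNIV. \<Sum>i\<in>UNIV. \<bar>Y k $ i\<bar>) + 1"

lemma CY_pos: "CY > 0"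
  unfolding CY_def by (simp add: add_nonneg_pos sum_nonneg)

lemma TH_lip:
  assumes "\<And>i. \<bar>z i - z' i\<bar> \<le> r"
  shows "\<bar>TH s z k - TH s z' k\<bar> \<le> eps * CY * r"
proof -
  have r: "0 \<le> r" using assms[of undefined] by simp
  have "TH s z k - TH s z' k = eps * (\<Sum>i\<in>UNIV. (z i - z' i) * Y k $ i)"
    by (simp add: th_def lin_eq algebra_simps sum_subtractf)
  moreover have "\<bar>\<Sum>i\<in>UNIV. (z i - z' i) * Y k $ i\<bar> \<le> (\<Sum>i\<in>UNIV. r * \<bar>Y k $ i\<bar>)"
    by (rule order_trans[OF sum_abs]) (auto intro!: sum_mono mult_right_mono simp: abs_mult assms)
  moreover have "(\<Sum>i\<in>UNIV. r * \<bar>Y k $ i\<bar>) \<le> r * CY"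
  proof -
    have "(\<Sum>i\<in>UNIV. \<bar>Y k $ i\<bar>) \<le> (\<Sum>k\<in>UNIV. \<Sum>i\<in>UNIV. \<bar>Y k $ i\<bar>)"
      by (rule member_le_sum) (auto intro: sum_nonneg)
    then have "(\<Sum>i\<in>UNIV. \<bar>Y k $ i\<bar>) \<le> CY" unfolding CY_def by linarith
    then show ?thesis using r by (simp add: sum_distrib_left[symmetric] mult_left_mono)
  qed
  ultimately have "\<bar>\<Sum>i\<in>UNIV. (z i - z' i) * Y k $ i\<bar> \<le> CY * r" by (simp add: mult.commute)
  then have "eps * \<bar>\<Sum>i\<in>UNIV. (z i - z' i) * Y k $ i\<bar> \<le> eps * (CY * r)"
    using eps_pos by (intro mult_left_mono) auto
  then show ?thesis using \<open>TH s z k - TH s z' k = _\<close> eps_pos by (simp add: abs_mult mult.assoc)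
qed

lemma expose: "\<exists>a. \<forall>k. k \<noteq> y \<longrightarrow> a \<bullet> Y k < a \<bullet> Y y"
proof -
  let ?S = "convex hull (Y ` (UNIV - {y}))"
  have "convex ?S" "closed ?S"
    by (auto intro!: compact_imp_closed finite_imp_compact_convex_hull)
  from separating_hyperplane_closed_point[OF this no_conv[of y]]
  obtain a b where ab: "a \<bullet> Y y < b" "\<forall>x\<in>?S. b < a \<bullet> x" by blast
  have "(- a) \<bullet> Y k < (- a) \<bullet> Y y" if "k \<noteq> y" for k
  proof -
    have "Y k \<in> ?S" using that by (intro hull_inc) auto
    then show ?thesis using ab by auto
  qed
  then show ?thesis by blast
qed

lemma far_point: "\<exists>z0. \<forall>k. k \<noteq> y \<longrightarrow> R < eps * ((\<chi> i. z0 i) \<bullet> (Y y - Y k))"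
proof -
  obtain a where a: "\<And>k. k \<noteq> y \<Longrightarrow> a \<bullet> Y k < a \<bullet> Y y" using expose[of y] by blast
  define \<delta> where "\<delta> = Min (insert 1 ((\<lambda>k. a \<bullet> Y y - a \<bullet> Y k) ` (UNIV - {y})))"
  have \<delta>pos: "0 < \<delta>" unfolding \<delta>_def using a by (subst Min_gr_iff) auto
  have \<delta>le: "\<delta> \<le> a \<bullet> Y y - a \<bullet> Y k" if "k \<noteq> y" for k
    unfolding \<delta>_def using that by (intro Min_le) auto
  define t where "t = (\<bar>R\<bar> + 1) / (eps * \<delta>)"
  have tpos: "0 < t" using \<delta>pos eps_pos by (simp add: t_def)
  have "R < eps * ((\<chi> i. t * a $ i) \<bullet> (Y y - Y k))" if "k \<noteq> y" for k
  proof -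
    have v: "(\<chi> i. t * a $ i) = t *\<^sub>R a" by (simp add: vec_eq_iff)
    have "eps * t * \<delta> \<le> eps * t * (a \<bullet> Y y - a \<bullet> Y k)"
      using \<delta>le[OF that] tpos eps_pos by (intro mult_left_mono) auto
    moreover have "eps * t * \<delta> = \<bar>R\<bar> + 1" using \<delta>pos eps_pos by (simp add: t_def)
    ultimately show ?thesis by (simp add: v inner_diff_right algebra_simps)
  qed
  then show ?thesis by (intro exI[of _ "\<lambda>i. t * a $ i"]) simp
qed

lemma far_box_pos:
  "0 < emeasure G {z. \<forall>k. k \<noteq> y \<longrightarrow> R < eps * ((\<chi> i. z i) \<bullet> (Y y - Y k))}"
proof -
  obtain z0 where z0: "\<And>k. k \<noteq> y \<Longrightarrow> R + 2 < eps * ((\<chi> i. z0 i) \<bullet> (Y y - Y k))"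
    using far_point[of y "R + 2"] by blast
  define r where "r = 1 / (eps * CY)"
  have r: "0 < r" using eps_pos CY_pos by (simp add: r_def)
  have "{z. \<forall>i. \<bar>z i - z0 i\<bar> < r} \<subseteq> {z. \<forall>k. k \<noteq> y \<longrightarrow> R < eps * ((\<chi> i. z i) \<bullet> (Y y - Y k))}"
  proof safe
    fix z k assume zb: "\<forall>i. \<bar>z i - z0 i\<bar> < r" and k: "k \<noteq> y"
    have l1: "\<bar>TH 0 z y - TH 0 z0 y\<bar> \<le> eps * CY * r"
      and l2: "\<bar>TH 0 z k - TH 0 z0 k\<bar> \<le> eps * CY * r"
      using zb by (intro TH_lip less_imp_le; simp)+
    have e1: "eps * CY * r = 1" using eps_pos CY_pos by (simp add: r_def)
    have "eps * ((\<chi> i. z i) \<bullet> (Y y - Y k)) = TH 0 z y - TH 0 z k"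
      by (simp add: th_def inner_diff_right algebra_simps)
    moreover have "eps * ((\<chi> i. z0 i) \<bullet> (Y y - Y k)) = TH 0 z0 y - TH 0 z0 k"
      by (simp add: th_def inner_diff_right algebra_simps)
    ultimately show "R < eps * ((\<chi> i. z i) \<bullet> (Y y - Y k))" using z0[OF k] l1 l2 e1 by linarith
  qed
  then have "emeasure G {z. \<forall>i. \<bar>z i - z0 i\<bar> < r} \<le> emeasure G {z. \<forall>k. k \<noteq> y \<longrightarrow> R < eps * ((\<chi> i. z i) \<bullet> (Y y - Y k))}"
  proof (rule emeasure_mono)
    have "{z \<in> space G. \<forall>k. k \<noteq> y \<longrightarrow> R < eps * ((\<chi> i. z i) \<bullet> (Y y - Y k))} \<in> sets G" by measurable
    then show "{z. \<forall>k. k \<noteq> y \<longrightarrow> R < eps * ((\<chi> i. z i) \<bullet> (Y y - Y k))} \<in> sets G" by simp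
  qed
  moreover have "0 < emeasure G {z. \<forall>i. \<bar>z i - z0 i\<bar> < r}" by (rule box_pos[OF r])
  ultimately show ?thesis by (rule order.strict_trans2[rotated])
qed


lemma th_comb:
  "TH (u *\<^sub>R s + (1 - u) *\<^sub>R s') z y + (1 - u) * (s - s') $ y = TH s z y"
  "TH (u *\<^sub>R s + (1 - u) *\<^sub>R s') z y - u * (s - s') $ y = TH s' z y"
  by (simp_all add: th_def algebra_simps)

lemma strict_pointwise:
  assumes u: "0 < u" "u < 1"
    and K: "K \<noteq> {}" "- K \<noteq> {}"
    and vK: "\<And>y. y \<in> K \<Longrightarrow> (s - s') $ y = vm"
    and vnK: "\<And>y. y \<in> - K \<Longrightarrow> (s - s') $ y \<le> vm - \<Delta>"
    and gz: "\<bar>(MAX y\<in>K. TH (u *\<^sub>R s + (1 - u) *\<^sub>R s') z y) - (MAX y\<in>-K. TH (u *\<^sub>R s + (1 - u) *\<^sub>R s') z y)\<bar> < u * (1 - u) * \<Delta>"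
  shows "M (u *\<^sub>R s + (1 - u) *\<^sub>R s') z < u * M s z + (1 - u) * M s' z"
proof -
  define m where "m = u *\<^sub>R s + (1 - u) *\<^sub>R s'"
  define a where "a = (MAX y\<in>K. TH m z y)"
  define b where "b = (MAX y\<in>-K. TH m z y)"
  have "a \<in> (\<lambda>y. TH m z y) ` K" unfolding a_def using K by (intro Max_in) auto
  then obtain kK where kK: "kK \<in> K" "a = TH m z kK" by auto
  have "b \<in> (\<lambda>y. TH m z y) ` (-K)" unfolding b_def using K by (intro Max_in) auto
  then obtain k' where k': "k' \<in> -K" "b = TH m z k'" by auto
  have Ms: "a + (1 - u) * vm \<le> M s z"
    using MM_ge[of eps Y s z kK] th_comb(1)[of u s s' z kK] vK[OF kK(1)] kK(2) by (simp add: m_def)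
  have Ms': "b - u * (s - s') $ k' \<le> M s' z"
    using MM_ge[of eps Y s' z k'] th_comb(2)[of u s s' z k'] k'(2) by (simp add: m_def)
  have vk': "(s - s') $ k' \<le> vm - \<Delta>" by (rule vnK[OF k'(1)])
  have Mm: "M m z \<le> max a b"
    unfolding MM_le_iff
  proof
    fix y show "TH m z y \<le> max a b"
    proof (cases "y \<in> K")
      case True then have "TH m z y \<le> a" unfolding a_def by (intro Max_ge) auto
      then show ?thesis by simp
    next
      case False then have "TH m z y \<le> b" unfolding b_def by (intro Max_ge) auto
      then show ?thesis by simp
    qed
  qed
  have mx: "max a b \<le> u * a + (1 - u) * b + \<bar>a - b\<bar>"
  proof (cases "a \<le> b")
    case True
    have "b = u * a + (1 - u) * b + u * (b - a)" by (simp add: algebra_simps)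
    also have "u * (b - a) \<le> \<bar>a - b\<bar>" using True u by (simp add: mult_left_le_one_le)
    finally show ?thesis using True by simp
  next
    case False
    have "a = u * a + (1 - u) * b + (1 - u) * (a - b)" by (simp add: algebra_simps)
    also have "(1 - u) * (a - b) \<le> \<bar>a - b\<bar>" using False u by (simp add: mult_left_le_one_le)
    finally show ?thesis using False by simp
  qed
  have g: "\<bar>a - b\<bar> < u * (1 - u) * \<Delta>" using gz by (simp add: a_def b_def m_def)
  have "u * (a + (1 - u) * vm) \<le> u * M s z" using Ms u by (intro mult_left_mono) auto
  moreover have "(1 - u) * (b - u * (s - s') $ k') \<le> (1 - u) * M s' z" using Ms' u by (intro mult_left_mono) auto
  moreover have "(1 - u) * (u * (s - s') $ k') \<le> (1 - u) * (u * (vm - \<Delta>))"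
    using vk' u by (intro mult_left_mono) auto
  ultimately have ineq: "u * a + (1 - u) * b + u * (1 - u) * \<Delta> \<le> u * M s z + (1 - u) * M s' z"
    by (simp add: algebra_simps)
  show ?thesis unfolding m_def[symmetric] using Mm mx g ineq by linarith
qed

lemma dominate: "\<exists>z. \<forall>k. k \<noteq> y \<longrightarrow> TH m z k < TH m z y"
proof -
  obtain z where z: "\<And>k. k \<noteq> y \<Longrightarrow> 2 * norm m < eps * ((\<chi> i. z i) \<bullet> (Y y - Y k))"
    using far_point[of y "2 * norm m"] by blast
  have "TH m z k < TH m z y" if "k \<noteq> y" for k
  proof -
    have "\<bar>m $ k\<bar> \<le> norm m" "\<bar>m $ y\<bar> \<le> norm m" by (auto intro: component_le_norm_cart)
    then show ?thesis using z[OF that] by (simp add: th_def inner_diff_right algebra_simps)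
  qed
  then show ?thesis by blast
qed

lemma F_strict: "strictly_convex_on simplex_dir F"
  unfolding strictly_convex_on_def
proof (intro conjI ballI allI impI)
  show "convex (simplex_dir :: (real^'y) set)"
    unfolding convex_def simplex_dir_def
    by (auto simp: sum.distrib sum_distrib_left[symmetric])
next
  interpret G: prob_space G by (rule Gprob)
  fix s s' :: "real^'y" and u :: real
  assume ss: "s \<in> simplex_dir" "s' \<in> simplex_dir" and hu: "s \<noteq> s' \<and> 0 < u \<and> u < 1"
  then have u: "0 < u" "u < 1" and sne: "s \<noteq> s'" by auto
  define m where "m = u *\<^sub>R s + (1 - u) *\<^sub>R s'"
  define v where "v = s - s'"
  have vsum: "(\<Sum>y\<in>UNIV. v $ y) = 0" using ss by (simp add: v_def simplex_dir_def sum_subtractf)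
  have "\<exists>y1 y2. v $ y1 \<noteq> v $ y2"
  proof (rule ccontr)
    assume "\<not> ?thesis"
    then have c: "\<And>y. v $ y = v $ undefined" by auto
    have "(\<Sum>y\<in>UNIV. v $ y) = (\<Sum>y\<in>(UNIV::'y set). v $ undefined)" by (rule sum.cong[OF refl], rule c)
    then have "(\<Sum>y\<in>UNIV. v $ y) = real CARD('y) * v $ undefined" by simp
    then have "v $ undefined = 0" using vsum by simp
    then have "v = 0" using c by (simp add: vec_eq_iff)
    then show False using sne by (simp add: v_def)
  qed
  then obtain y1 y2 where y12: "v $ y1 \<noteq> v $ y2" by blast
  define vm where "vm = Max (range (\<lambda>y. v $ y))"
  define K where "K = {y. v $ y = vm}"
  have vle: "v $ y \<le> vm" for y unfolding vm_def by (rule Max_ge) auto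
  have "vm \<in> range (\<lambda>y. v $ y)" unfolding vm_def by (rule Max_in) auto
  then obtain yK where yK: "yK \<in> K" by (auto simp: K_def)
  obtain yN where yN: "yN \<in> -K" using y12 by (auto simp: K_def) metis
  have K: "K \<noteq> {}" "-K \<noteq> {}" using yK yN by auto
  define \<Delta> where "\<Delta> = Min ((\<lambda>y. vm - v $ y) ` (-K))"
  have \<Delta>pos: "0 < \<Delta>" unfolding \<Delta>_def using K vle by (subst Min_gr_iff) (auto simp: K_def less_le)
  have vnK: "v $ y \<le> vm - \<Delta>" if "y \<in> -K" for y
  proof -
    have "\<Delta> \<le> vm - v $ y" unfolding \<Delta>_def using that by (intro Min_le) auto
    then show ?thesis by simp
  qed
  define g where "g z = (MAX y\<in>K. TH m z y) - (MAX y\<in>-K. TH m z y)" for z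
  define c where "c = u * (1 - u) * \<Delta>"
  have cpos: "0 < c" using u \<Delta>pos by (simp add: c_def)
  have g_meas: "g \<in> borel_measurable G"
    unfolding g_def by (intro borel_measurable_diff borel_measurable_Max) auto
  have g_lip: "\<bar>g z - g z'\<bar> \<le> 2 * (eps * CY * r)" if "\<And>i. \<bar>z i - z' i\<bar> \<le> r" for z z' r
  proof -
    have "\<bar>(MAX y\<in>K. TH m z y) - (MAX y\<in>K. TH m z' y)\<bar> \<le> eps * CY * r"
      using K by (intro Max_diff_le TH_lip that) auto
    moreover have "\<bar>(MAX y\<in>-K. TH m z y) - (MAX y\<in>-K. TH m z' y)\<bar> \<le> eps * CY * r"
      using K by (intro Max_diff_le TH_lip that) auto
    ultimately show ?thesis unfolding g_def by linarith
  qed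
  obtain za where za: "\<And>k. k \<noteq> yK \<Longrightarrow> TH m za k < TH m za yK" using dominate[of yK m] by blast
  obtain zb where zb: "\<And>k. k \<noteq> yN \<Longrightarrow> TH m zb k < TH m zb yN" using dominate[of yN m] by blast
  have ga: "0 \<le> g za"
  proof -
    have "TH m za yK \<le> (MAX y\<in>K. TH m za y)" using yK by (intro Max_ge) auto
    moreover have "(MAX y\<in>-K. TH m za y) \<le> TH m za yK"
      using K yK za by (subst Max_le_iff) (auto, metis less_imp_le ComplD)
    ultimately show ?thesis unfolding g_def by simp
  qed
  have gb: "g zb \<le> 0"
  proof -
    have "TH m zb yN \<le> (MAX y\<in>-K. TH m zb y)" using yN by (intro Max_ge) auto
    moreover have "(MAX y\<in>K. TH m zb y) \<le> TH m zb yN"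
      using K yN zb by (subst Max_le_iff) (auto, metis less_imp_le ComplD)
    ultimately show ?thesis unfolding g_def by simp
  qed
  define B where "B = (\<Sum>i\<in>UNIV. \<bar>zb i - za i\<bar>)"
  define p where "p t = (\<lambda>i. za i + t * (zb i - za i))" for t :: real
  define h where "h t = g (p t)" for t
  have hlip: "(2 * (eps * CY * B))-lipschitz_on {0..1} h"
    unfolding lipschitz_on_def
  proof (intro conjI ballI)
    show "0 \<le> 2 * (eps * CY * B)" using eps_pos CY_pos by (auto simp: B_def intro!: sum_nonneg)
    fix t t' :: real assume "t \<in> {0..1}" "t' \<in> {0..1}"
    have "\<bar>p t i - p t' i\<bar> \<le> \<bar>t - t'\<bar> * B" for i
    proof -
      have "\<bar>p t i - p t' i\<bar> = \<bar>t - t'\<bar> * \<bar>zb i - za i\<bar>" by (simp add: p_def algebra_simps abs_mult[symmetric])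
      also have "\<dots> \<le> \<bar>t - t'\<bar> * B" unfolding B_def
        by (intro mult_left_mono member_le_sum) auto
      finally show ?thesis .
    qed
    then have "\<bar>h t - h t'\<bar> \<le> 2 * (eps * CY * (\<bar>t - t'\<bar> * B))" unfolding h_def by (rule g_lip)
    then show "dist (h t) (h t') \<le> 2 * (eps * CY * B) * dist t t'" by (simp add: dist_real_def algebra_simps)
  qed
  have "\<exists>t\<ge>0. t \<le> 1 \<and> h t = 0"
    by (rule IVT2') (use ga gb lipschitz_on_continuous_on[OF hlip] in \<open>auto simp: h_def p_def\<close>)
  then obtain t0 where "h t0 = 0" by blast
  define z0 where "z0 = p t0"
  have gz0: "g z0 = 0" using \<open>h t0 = 0\<close> by (simp add: z0_def h_def)
  define r where "r = c / (4 * (eps * CY))"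
  have rpos: "0 < r" using cpos eps_pos CY_pos by (simp add: r_def)
  define S where "S = {z. \<bar>g z\<bar> < c}"
  have Ssets: "S \<in> sets G"
  proof -
    have "{z \<in> space G. \<bar>g z\<bar> < c} \<in> sets G" using g_meas by measurable
    then show ?thesis by (simp add: S_def)
  qed
  have "{z. \<forall>i. \<bar>z i - z0 i\<bar> < r} \<subseteq> S"
  proof safe
    fix z assume "\<forall>i. \<bar>z i - z0 i\<bar> < r"
    then have "\<bar>g z - g z0\<bar> \<le> 2 * (eps * CY * r)" by (intro g_lip less_imp_le) auto
    also have "\<dots> = c / 2" using eps_pos CY_pos by (simp add: r_def)
    finally show "z \<in> S" using gz0 cpos by (simp add: S_def)
  qed
  then have "emeasure G {z. \<forall>i. \<bar>z i - z0 i\<bar> < r} \<le> emeasure G S" by (rule emeasure_mono[OF _ Ssets])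
  with box_pos[OF rpos, of z0] have Spos: "emeasure G S \<noteq> 0" by auto
  have "(\<integral>z. M m z \<partial>G) < (\<integral>z. u * M s z + (1 - u) * M s' z \<partial>G)"
  proof (rule G.integral_less_AE[OF _ _ Spos Ssets])
    show "integrable G (M m)" by (rule integrable_MM)
    show "integrable G (\<lambda>z. u * M s z + (1 - u) * M s' z)"
      by (auto intro!: Bochner_Integration.integrable_add integrable_mult_right integrable_MM)
    show "AE z\<in>S in G. M m z \<noteq> u * M s z + (1 - u) * M s' z"
    proof (rule AE_I2, intro impI)
      fix z assume "z \<in> S"
      then have "\<bar>g z\<bar> < u * (1 - u) * \<Delta>" by (simp add: S_def c_def)
      then have "M m z < u * M s z + (1 - u) * M s' z"
        unfolding m_def
        by (intro strict_pointwise[OF u K, where vm=vm and \<Delta>=\<Delta>])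
           (use vnK in \<open>auto simp: K_def v_def g_def m_def\<close>)
      then show "M m z \<noteq> u * M s z + (1 - u) * M s' z" by simp
    qed
    show "AE z in G. M m z \<le> u * M s z + (1 - u) * M s' z"
      using u by (intro AE_I2) (auto simp: m_def intro!: MM_conv)
  qed
  also have "\<dots> = u * F s + (1 - u) * F s'"
    unfolding Fpert_MM by (subst Bochner_Integration.integral_add) (auto intro!: integrable_MM integrable_mult_right)
  finally show "F (u *\<^sub>R s + (1 - u) *\<^sub>R s') < u * F s + (1 - u) * F s'"
    by (simp add: Fpert_MM m_def)
qed

end

context pm
begin

definition D :: "real^'y \<Rightarrow> real^'y" where "D s = (\<integral>z. Q s z \<partial>G)"

definition phi :: "real^'y \<Rightarrow> real^'y \<Rightarrow> real" where "phi q s = s \<bullet> q - F s"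

definition Ebox :: "'y \<Rightarrow> real \<Rightarrow> ('d \<Rightarrow> real) set" where
  "Ebox y R = {z. \<forall>k. k \<noteq> y \<longrightarrow> R < eps * ((\<chi> i. z i) \<bullet> (Y y - Y k))}"

lemma Ebox_sets: "Ebox y R \<in> sets G"
proof -
  have "{z \<in> space G. \<forall>k. k \<noteq> y \<longrightarrow> R < eps * ((\<chi> i. z i) \<bullet> (Y y - Y k))} \<in> sets G" by measurable
  then show ?thesis by (simp add: Ebox_def)
qed

lemma Ebox_pos: "0 < measure G (Ebox y R)"
proof -
  interpret G: prob_space G by (rule Gprob)
  have "0 < emeasure G (Ebox y R)" unfolding Ebox_def by (rule far_box_pos)
  then show ?thesis by (simp add: G.emeasure_eq_measure)
qed

lemma D_lower:
  assumes "norm s \<le> R"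
  shows "measure G (Ebox y (2 * R)) \<le> D s $ y"
proof -
  interpret G: prob_space G by (rule Gprob)
  have "D s $ y = D s \<bullet> axis y 1" by (simp add: inner_axis)
  also have "\<dots> = (\<integral>z. Q s z \<bullet> axis y 1 \<partial>G)" unfolding D_def
    by (rule integral_inner_left[symmetric]) (rule integrable_Q)
  finally have Dy: "D s $ y = (\<integral>z. Q s z \<bullet> axis y 1 \<partial>G)" .
  have "(\<integral>z. indicator (Ebox y (2 * R)) z \<partial>G) \<le> (\<integral>z. Q s z \<bullet> axis y 1 \<partial>G)"
  proof (rule integral_mono_AE)
    show "integrable G (indicator (Ebox y (2 * R)) :: _ \<Rightarrow> real)"
      using Ebox_sets by (intro integrable_real_indicator) (auto simp: G.emeasure_eq_measure)
    show "integrable G (\<lambda>z. Q s z \<bullet> axis y 1)" by (intro integrable_inner_left integrable_Q)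
    show "AE z in G. indicator (Ebox y (2 * R)) z \<le> Q s z \<bullet> axis y 1"
      using Q_AE[of s]
    proof eventually_elim
      case (elim z)
      then obtain y' where A: "Am s z = {y'}" and Qz: "Q s z = axis y' 1" by blast
      show ?case
      proof (cases "z \<in> Ebox y (2 * R)")
        case True
        have "TH s z k < TH s z y" if "k \<noteq> y" for k
        proof -
          have "\<bar>s $ k\<bar> \<le> norm s" "\<bar>s $ y\<bar> \<le> norm s" by (auto intro: component_le_norm_cart)
          moreover have "2 * R < eps * ((\<chi> i. z i) \<bullet> (Y y - Y k))" using True that by (auto simp: Ebox_def)
          ultimately show ?thesis using assms by (simp add: th_def inner_diff_right algebra_simps)
        qed
        moreover have "y' \<in> Am s z" using A by auto
        then have "TH s z y \<le> TH s z y'" using MM_ge[of eps Y s z y] by (simp add: Am_def)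
        ultimately have "y' = y" by (metis not_le)
        then show ?thesis using True by (simp add: Qz inner_axis)
      next
        case False
        then show ?thesis by (simp add: Qz inner_axis_axis)
      qed
    qed
  qed
  then show ?thesis using Dy Ebox_sets by simp
qed

lemma F_ge_coord: "s $ y \<le> F s"
  using F_ge_lin[OF axis_simplex[of y], where eps=eps and Y=Y and s=s] by (simp add: inner_axis)

lemma F0_nonneg: "0 \<le> F 0"
  using F_ge_coord[of 0 undefined] by simp

lemma coercive:
  assumes s: "s \<in> simplex_dir" and q: "q \<in> prob_simplex" and dq: "\<And>y. \<delta> \<le> q $ y" and d0: "0 \<le> \<delta>"
  shows "phi q s \<le> - (\<delta> / 2) * norm s"
proof -
  have s0: "(\<Sum>y\<in>UNIV. s $ y) = 0" using s by (simp add: simplex_dir_def)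
  have q1: "(\<Sum>y\<in>UNIV. q $ y) = 1" using q by (simp add: prob_simplex_def)
  define ms where "ms = Max (range (\<lambda>y. s $ y))"
  have sle: "s $ y \<le> ms" for y unfolding ms_def by (rule Max_ge) auto
  have "ms \<in> range (\<lambda>y. s $ y)" unfolding ms_def by (rule Max_in) auto
  then obtain ys where ys: "s $ ys = ms" by auto
  have Fs: "ms \<le> F s" using F_ge_coord[of s ys] ys by simp
  have "(\<Sum>y\<in>UNIV. (s $ y - ms) * q $ y) = (\<Sum>y\<in>UNIV. s $ y * q $ y) - ms * (\<Sum>y\<in>UNIV. q $ y)"
    by (simp add: left_diff_distrib sum_subtractf sum_distrib_left)
  then have "s \<bullet> q - ms = (\<Sum>y\<in>UNIV. (s $ y - ms) * q $ y)"
    by (simp add: inner_vec_def q1)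
  also have "\<dots> \<le> (\<Sum>y\<in>UNIV. (s $ y - ms) * \<delta>)"
    by (intro sum_mono mult_left_mono_neg dq) (use sle in auto)
  also have "\<dots> = - (real CARD('y) * ms * \<delta>)"
    by (simp add: sum_distrib_right[symmetric] sum_subtractf s0)
  finally have A: "s \<bullet> q - ms \<le> - (real CARD('y) * ms * \<delta>)" .
  have ms0: "0 \<le> ms"
  proof (rule ccontr)
    assume "\<not> 0 \<le> ms"
    then have m0: "ms < 0" by simp
    have "(\<Sum>y\<in>UNIV. s $ y) \<le> (\<Sum>y\<in>(UNIV::'y set). ms)" by (intro sum_mono sle)
    also have "\<dots> = real CARD('y) * ms" by simp
    also have "\<dots> < 0" using m0 by (simp add: mult_pos_neg)
    finally have "(\<Sum>y\<in>UNIV. s $ y) < 0" .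
    then show False using s0 by simp
  qed
  have "(\<Sum>y\<in>UNIV. \<bar>s $ y\<bar>) = (\<Sum>y\<in>UNIV. 2 * max (s $ y) 0 - s $ y)"
    by (intro sum.cong) auto
  also have "\<dots> = 2 * (\<Sum>y\<in>UNIV. max (s $ y) 0)"
    by (simp add: sum_subtractf s0 sum_distrib_left)
  also have "\<dots> \<le> 2 * (\<Sum>y\<in>(UNIV::'y set). ms)"
    using sle ms0 by (intro mult_left_mono sum_mono) auto
  finally have B: "norm s \<le> 2 * real CARD('y) * ms"
    using norm_le_l1_cart[of s] by simp
  have "phi q s \<le> s \<bullet> q - ms" using Fs by (simp add: phi_def)
  also have "\<dots> \<le> - (real CARD('y) * ms * \<delta>)" by (rule A)
  also have "\<dots> \<le> - (\<delta> / 2) * norm s"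
  proof -
    have "\<delta> * norm s \<le> \<delta> * (2 * real CARD('y) * ms)" using B d0 by (rule mult_left_mono)
    then show ?thesis by (simp add: algebra_simps)
  qed
  finally show ?thesis .
qed

lemma fenchel_simplex: "q \<in> prob_simplex \<Longrightarrow> fenchel_conj F q \<le> 0"
  unfolding fenchel_conj_def by (rule SUP_least) (use F_ge_lin in auto)

lemma fenchel_lower: "ereal (phi q s) \<le> fenchel_conj F q"
  unfolding fenchel_conj_def phi_def by (rule SUP_upper) auto

lemma fenchel_dom: "{q. fenchel_conj F q \<noteq> \<infinity>} = prob_simplex"
proof safe
  fix q :: "real^'y" assume q: "q \<in> prob_simplex" "fenchel_conj F q = \<infinity>"
  then show False using fenchel_simplex[OF q(1)] by simp
next
  fix q :: "real^'y" assume fin: "fenchel_conj F q \<noteq> \<infinity>"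
  then obtain r where r: "fenchel_conj F q \<le> ereal r"
    by (metis ereal_infty_less(1) less_PInf_Ex_of_nat less_imp_le not_infty_ereal)
  have bnd: "phi q s \<le> r" for s using order.trans[OF fenchel_lower r] by simp
  show "q \<in> prob_simplex"
  proof (rule ccontr)
    assume nq: "q \<notin> prob_simplex"
    show False
    proof (cases "\<exists>y. q $ y < 0")
      case True
      then obtain y where y: "q $ y < 0" by blast
      define t where "t = (\<bar>r\<bar> + \<bar>F 0\<bar> + 1) / (- q $ y)"
      have t: "0 < t" unfolding t_def by (rule divide_pos_pos) (use y in auto)
      define s where "s = (- t) *\<^sub>R axis y (1::real)"
      have "F s \<le> F 0" using t by (intro F_mono) (auto simp: s_def axis_def)
      moreover have "s \<bullet> q = - t * q $ y" by (simp add: s_def inner_axis')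
      moreover have "- t * q $ y = \<bar>r\<bar> + \<bar>F 0\<bar> + 1" using y by (simp add: t_def)
      ultimately have "phi q s > r" by (simp add: phi_def)
      then show False using bnd[of s] by simp
    next
      case False
      then have "(\<Sum>y\<in>UNIV. q $ y) \<noteq> 1" using nq by (auto simp: prob_simplex_def not_less)
      then have ne: "(\<Sum>y\<in>UNIV. q $ y) - 1 \<noteq> 0" by simp
      define t where "t = (\<bar>r\<bar> + \<bar>F 0\<bar> + 1) / ((\<Sum>y\<in>UNIV. q $ y) - 1)"
      have "phi q (t *\<^sub>R 1) = t * ((\<Sum>y\<in>UNIV. q $ y) - 1) - F 0"
        by (simp add: phi_def F_const inner_one_vec algebra_simps)
      also have "t * ((\<Sum>y\<in>UNIV. q $ y) - 1) = \<bar>r\<bar> + \<bar>F 0\<bar> + 1" using ne by (simp add: t_def)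
      finally have "phi q (t *\<^sub>R 1) > r" by simp
      then show False using bnd[of "t *\<^sub>R 1"] by simp
    qed
  qed
qed


definition Pplus :: "(real^'y) set" where
  "Pplus = {q. (\<forall>y. 0 < q $ y) \<and> (\<Sum>y\<in>UNIV. q $ y) = 1}"

lemma Pplus_simplex: "q \<in> Pplus \<Longrightarrow> q \<in> prob_simplex"
  by (auto simp: Pplus_def prob_simplex_def less_imp_le)

definition mq :: "real^'y \<Rightarrow> real" where "mq q = Min (range (\<lambda>y. q $ y))"

lemma mq_le: "mq q \<le> q $ y" unfolding mq_def by (rule Min_le) auto

lemma mq_pos: "q \<in> Pplus \<Longrightarrow> 0 < mq q"
  unfolding mq_def Pplus_def by (subst Min_gr_iff) auto

lemma F_cont: "continuous_on UNIV F"
  by (rule lipschitz_on_continuous_on[OF F_lipschitz])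

lemma proj_dir: "s - proj_ones s \<in> simplex_dir"
proof -
  have "(\<Sum>y\<in>UNIV. (s - proj_ones s) $ y) = (\<Sum>y\<in>UNIV. s $ y) - real CARD('y) * ((\<Sum>y\<in>UNIV. s $ y) / real CARD('y))"
    by (simp add: proj_ones_def sum_subtractf)
  also have "\<dots> = 0" by simp
  finally show ?thesis by (simp add: simplex_dir_def)
qed

lemma phi_proj: "q \<in> prob_simplex \<Longrightarrow> phi q s = phi q (s - proj_ones s)"
  using F_proj[of q eps Y s] by (simp add: phi_def inner_diff_left)

lemma dir_closed: "closed (simplex_dir :: (real^'y) set)"
proof -
  have "simplex_dir = {x :: real^'y. 1 \<bullet> x = 0}" by (simp add: simplex_dir_def inner_one_vec)
  moreover have "closed {x :: real^'y. 1 \<bullet> x = 0}" by (rule closed_hyperplane)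
  ultimately show ?thesis by simp
qed

lemma phi_cont: "continuous_on UNIV (phi q)"
  unfolding phi_def by (intro continuous_intros F_cont)

lemma exists_max:
  assumes q: "q \<in> prob_simplex" and d: "0 < \<delta>" "\<And>y. \<delta> \<le> q $ y"
  shows "\<exists>s\<in>simplex_dir. \<forall>s'. phi q s' \<le> phi q s"
proof -
  define R where "R = 2 * F 0 / \<delta>"
  define K where "K = simplex_dir \<inter> cball (0::real^'y) R"
  have "compact K" unfolding K_def by (intro closed_Int_compact dir_closed compact_cball)
  moreover have "0 \<in> K" using F0_nonneg d by (auto simp: K_def R_def simplex_dir_def)
  ultimately obtain s0 where s0: "s0 \<in> K" "\<And>s. s \<in> K \<Longrightarrow> phi q s \<le> phi q s0"
    using continuous_attains_sup[of K "phi q"] continuous_on_subset[OF phi_cont] by blast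
  have "phi q s' \<le> phi q s0" for s'
  proof -
    define s'' where "s'' = s' - proj_ones s'"
    have s'': "s'' \<in> simplex_dir" by (simp add: s''_def proj_dir)
    have e: "phi q s' = phi q s''" unfolding s''_def by (rule phi_proj[OF q])
    show ?thesis
    proof (cases "s'' \<in> K")
      case True then show ?thesis using s0 e by simp
    next
      case False
      then have n: "R < norm s''" using s'' by (auto simp: K_def)
      have "phi q s'' \<le> - (\<delta> / 2) * norm s''" by (rule coercive[OF s'' q d(2)]) (use d in simp)
      also have "\<dots> < - (\<delta> / 2) * R" using n d by simp
      also have "\<dots> = phi q 0" using d by (simp add: R_def phi_def)
      also have "\<dots> \<le> phi q s0" using s0(2)[OF \<open>0 \<in> K\<close>] .
      finally show ?thesis using e by simp
    qed
  qed
  then show ?thesis using s0(1) by (auto simp: K_def)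
qed

lemma max_unique:
  assumes s1: "s1 \<in> simplex_dir" "\<And>s'. phi q s' \<le> phi q s1"
    and s2: "s2 \<in> simplex_dir" "\<And>s'. phi q s' \<le> phi q s2"
  shows "s1 = s2"
proof (rule ccontr)
  assume ne: "s1 \<noteq> s2"
  have A: "\<And>x y u. x \<in> simplex_dir \<Longrightarrow> y \<in> simplex_dir \<Longrightarrow> x \<noteq> y \<Longrightarrow> 0 < u \<Longrightarrow> u < 1 \<Longrightarrow>
      F (u *\<^sub>R x + (1 - u) *\<^sub>R y) < u * F x + (1 - u) * F y"
    using F_strict unfolding strictly_convex_on_def by blast
  have "F ((1/2) *\<^sub>R s1 + (1 - 1/2) *\<^sub>R s2) < (1/2) * F s1 + (1 - 1/2) * F s2"
    by (rule A[OF s1(1) s2(1) ne]) auto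
  then have "phi q ((1/2) *\<^sub>R s1 + (1 - 1/2) *\<^sub>R s2) > (1/2) * phi q s1 + (1/2) * phi q s2"
    by (simp add: phi_def inner_add_left algebra_simps)
  moreover have "phi q s1 = phi q s2" using s1(2)[of s2] s2(2)[of s1] by simp
  ultimately show False using s1(2)[of "(1/2) *\<^sub>R s1 + (1 - 1/2) *\<^sub>R s2"] by simp
qed

lemma max_grad:
  assumes "\<And>s'. phi q s' \<le> phi q s"
  shows "D s = q"
proof -
  have d: "(phi q has_derivative (\<lambda>h. h \<bullet> q - D s \<bullet> h)) (at s)"
    unfolding phi_def[abs_def] D_def
    by (intro has_derivative_diff bounded_linear_imp_has_derivative bounded_linear_inner_left F_deriv)
  have "(\<lambda>h. h \<bullet> q - D s \<bullet> h) = (\<lambda>v. 0)"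
    by (rule differential_zero_maxmin[of s UNIV, OF _ _ d]) (use assms in auto)
  then have "(q - D s) \<bullet> q - D s \<bullet> (q - D s) = 0" by metis
  then have "(q - D s) \<bullet> (q - D s) = 0" by (simp add: inner_diff_left inner_diff_right inner_commute)
  then show ?thesis by simp
qed

definition Gq :: "real^'y \<Rightarrow> real^'y" where
  "Gq q = (THE s. s \<in> simplex_dir \<and> (\<forall>s'. phi q s' \<le> phi q s))"

lemma Gq_prop:
  assumes "q \<in> Pplus"
  shows "Gq q \<in> simplex_dir" "\<And>s'. phi q s' \<le> phi q (Gq q)"
proof -
  have "\<exists>!s. s \<in> simplex_dir \<and> (\<forall>s'. phi q s' \<le> phi q s)"
    using exists_max[OF Pplus_simplex[OF assms] mq_pos[OF assms] mq_le] max_unique by blast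
  from theI'[OF this] show "Gq q \<in> simplex_dir" "\<And>s'. phi q s' \<le> phi q (Gq q)"
    unfolding Gq_def by auto
qed

lemma Gq_eq:
  assumes "q \<in> Pplus" "s \<in> simplex_dir" "\<And>s'. phi q s' \<le> phi q s"
  shows "Gq q = s"
  using max_unique[OF Gq_prop[OF assms(1)] assms(2,3)] .

lemma Gq_D: "q \<in> Pplus \<Longrightarrow> D (Gq q) = q"
  by (rule max_grad) (rule Gq_prop)

lemma Omega_eq:
  assumes "q \<in> Pplus"
  shows "fenchel_conj F q = ereal (phi q (Gq q))"
  unfolding fenchel_conj_def
proof (rule SUP_eqI)
  fix s :: "real^'y" show "ereal (s \<bullet> q - F s) \<le> ereal (phi q (Gq q))"
    using Gq_prop(2)[OF assms, of s] by (simp add: phi_def)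
next
  fix r assume "\<And>s. s \<in> UNIV \<Longrightarrow> ereal (s \<bullet> q - F s) \<le> r"
  then show "ereal (phi q (Gq q)) \<le> r" by (simp add: phi_def)
qed

lemma Gq_bound:
  assumes "q \<in> Pplus" "0 < \<delta>" "\<And>y. \<delta> \<le> q $ y"
  shows "norm (Gq q) \<le> 2 * F 0 / \<delta>"
proof -
  have "- F 0 = phi q 0" by (simp add: phi_def)
  also have "\<dots> \<le> phi q (Gq q)" by (rule Gq_prop(2)[OF assms(1)])
  also have "\<dots> \<le> - (\<delta> / 2) * norm (Gq q)"
    by (rule coercive[OF Gq_prop(1)[OF assms(1)] Pplus_simplex[OF assms(1)] assms(3)]) (use assms in simp)
  finally have "\<delta> * norm (Gq q) \<le> 2 * F 0" by simp
  then show ?thesis using assms(2) by (simp add: field_simps)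
qed


lemma sum_axis: "(\<Sum>i\<in>UNIV. axis y (1::real) $ i) = 1"
  by (simp add: axis_def)

lemma interior_Pplus: "interior_rel (simplex_hull :: (real^'y) set) prob_simplex = Pplus"
proof
  show "interior_rel simplex_hull prob_simplex \<subseteq> Pplus"
  proof
    fix q :: "real^'y" assume "q \<in> interior_rel simplex_hull prob_simplex"
    then have q: "q \<in> prob_simplex" and "\<exists>e>0. ball q e \<inter> simplex_hull \<subseteq> prob_simplex"
      by (auto simp: interior_rel_def)
    then obtain e where e: "0 < e" "ball q e \<inter> simplex_hull \<subseteq> prob_simplex" by blast
    have q1: "(\<Sum>i\<in>UNIV. q $ i) = 1" and q0: "\<And>i. 0 \<le> q $ i" using q by (auto simp: prob_simplex_def)
    have "0 < q $ y" for y
    proof (rule ccontr)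
      assume "\<not> 0 < q $ y"
      then have qy: "q $ y = 0" using q0[of y] by simp
      have "\<exists>y'. q $ y' \<noteq> 0"
      proof (rule ccontr)
        assume "\<not> ?thesis" then have "(\<Sum>i\<in>UNIV. q $ i) = 0" by simp
        then show False using q1 by simp
      qed
      then obtain y' where y': "q $ y' \<noteq> 0" by blast
      then have yy: "y' \<noteq> y" using qy by auto
      define t where "t = e / 3"
      define x where "x = q + t *\<^sub>R (axis y' 1 - axis y 1)"
      have "norm (axis y' (1::real) - axis y 1) \<le> norm (axis y' (1::real)) + norm (axis y (1::real))"
        by (rule norm_triangle_ineq4)
      then have "t * norm (axis y' (1::real) - axis y 1) \<le> t * (norm (axis y' (1::real)) + norm (axis y (1::real)))"
        using e by (intro mult_left_mono) (auto simp: t_def)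
      then have "norm (x - q) \<le> t * (norm (axis y' (1::real)) + norm (axis y (1::real)))"
        using e by (simp add: x_def t_def)
      also have "\<dots> = 2 * t" by (simp add: norm_axis_1)
      also have "\<dots> < e" using e by (simp add: t_def)
      finally have "x \<in> ball q e" by (simp add: dist_norm norm_minus_commute)
      moreover have "x \<in> simplex_hull"
        by (simp add: simplex_hull_def x_def sum.distrib sum_subtractf sum_distrib_left[symmetric] q1 sum_axis)
      ultimately have "x \<in> prob_simplex" using e by auto
      moreover have "x $ y = - t" using yy by (simp add: x_def qy axis_def)
      moreover have "0 < t" using e by (simp add: t_def)
      ultimately show False by (auto simp: prob_simplex_def dest: spec[of _ y])
    qed
    then show "q \<in> Pplus" using q1 by (simp add: Pplus_def)
  qed
next
  show "Pplus \<subseteq> interior_rel simplex_hull prob_simplex"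
  proof
    fix q :: "real^'y" assume q: "q \<in> Pplus"
    have "ball q (mq q) \<inter> simplex_hull \<subseteq> prob_simplex"
    proof
      fix x :: "real^'y" assume x: "x \<in> ball q (mq q) \<inter> simplex_hull"
      have "0 \<le> x $ y" for y
      proof -
        have "\<bar>(q - x) $ y\<bar> \<le> norm (q - x)" by (rule component_le_norm_cart)
        also have "\<dots> < mq q" using x by (simp add: dist_norm)
        also have "\<dots> \<le> q $ y" by (rule mq_le)
        finally show ?thesis by simp
      qed
      then show "x \<in> prob_simplex" using x by (simp add: prob_simplex_def simplex_hull_def)
    qed
    then show "q \<in> interior_rel simplex_hull prob_simplex"
      using q mq_pos[OF q] Pplus_simplex[OF q] by (auto simp: interior_rel_def)
  qed
qed

definition om :: "real^'y \<Rightarrow> real" where "om q = real_of_ereal (fenchel_conj F q)"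

lemma om_eq: "q \<in> Pplus \<Longrightarrow> om q = phi q (Gq q)"
  by (simp add: om_def Omega_eq)

lemma Pplus_convex: "convex Pplus"
  unfolding convex_def
proof (intro ballI allI impI)
  fix x y :: "real^'y" and u v :: real
  assume x: "x \<in> Pplus" and y: "y \<in> Pplus" and uv0: "0 \<le> u" "0 \<le> v" "u + v = 1"
  then have uv: "0 \<le> u \<and> 0 \<le> v \<and> u + v = 1" by simp
  have s: "(\<Sum>i\<in>UNIV. (u *\<^sub>R x + v *\<^sub>R y) $ i) = 1"
    using x y uv by (simp add: Pplus_def sum.distrib sum_distrib_left[symmetric])
  have p: "0 < (u *\<^sub>R x + v *\<^sub>R y) $ i" for i
  proof (cases "u = 0")
    case True then show ?thesis using y uv by (simp add: Pplus_def)
  next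
    case False then have "0 < u" using uv by simp
    then have "0 < u * x $ i" using x by (simp add: Pplus_def)
    moreover have "0 \<le> v * y $ i" using y uv by (simp add: less_imp_le Pplus_def)
    ultimately show ?thesis by simp
  qed
  show "u *\<^sub>R x + v *\<^sub>R y \<in> Pplus" using s p by (simp add: Pplus_def)
qed

lemma om_strict: "strictly_convex_on Pplus om"
  unfolding strictly_convex_on_def
proof (intro conjI Pplus_convex ballI allI impI)
  fix q1 q2 :: "real^'y" and u :: real
  assume q1: "q1 \<in> Pplus" and q2: "q2 \<in> Pplus" and h: "q1 \<noteq> q2 \<and> 0 < u \<and> u < 1"
  define q where "q = u *\<^sub>R q1 + (1 - u) *\<^sub>R q2"
  have qP: "q \<in> Pplus" unfolding q_def by (rule convexD[OF Pplus_convex q1 q2]) (use h in auto)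
  define s where "s = Gq q"
  have split: "phi q s = u * phi q1 s + (1 - u) * phi q2 s"
    by (simp add: phi_def q_def inner_add_right algebra_simps)
  have le1: "phi q1 s \<le> om q1" and le2: "phi q2 s \<le> om q2"
    using Gq_prop(2)[OF q1] Gq_prop(2)[OF q2] by (auto simp: om_eq q1 q2)
  have lt1: "phi q1 s < om q1"
  proof (rule ccontr)
    assume "\<not> phi q1 s < om q1"
    then have eq: "phi q1 s = om q1" using le1 by simp
    have "\<And>s'. phi q1 s' \<le> phi q1 s" using Gq_prop(2)[OF q1] eq by (simp add: om_eq q1)
    then have "D s = q1" by (rule max_grad)
    moreover have "D s = q" by (simp add: s_def Gq_D qP)
    ultimately have "q1 = q" by simp
    then have "(1 - u) *\<^sub>R (q2 - q1) = 0" by (simp add: q_def algebra_simps) auto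
    then show False using h by auto
  qed
  have "om q = u * phi q1 s + (1 - u) * phi q2 s" using split by (simp add: om_eq qP s_def)
  also have "\<dots> < u * om q1 + (1 - u) * om q2"
    using lt1 le2 h by (intro add_less_le_mono mult_strict_left_mono mult_left_mono) auto
  finally show "om (u *\<^sub>R q1 + (1 - u) *\<^sub>R q2) < u * om q1 + (1 - u) * om q2" by (simp add: q_def)
qed

lemma hull_closed: "closed (simplex_hull :: (real^'y) set)"
proof -
  have "simplex_hull = {x :: real^'y. 1 \<bullet> x = 1}" by (simp add: simplex_hull_def inner_one_vec)
  moreover have "closed {x :: real^'y. 1 \<bullet> x = 1}" by (rule closed_hyperplane)
  ultimately show ?thesis by simp
qed

lemma simplex_closed: "closed (prob_simplex :: (real^'y) set)"
proof -
  have "prob_simplex = simplex_hull \<inter> {q :: real^'y. \<forall>y. 0 \<le> q $ y}"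
    by (auto simp: prob_simplex_def simplex_hull_def)
  moreover have "closed {q :: real^'y. \<forall>y. 0 \<le> q $ y}"
    by (intro closed_Collect_all closed_Collect_le continuous_intros)
  ultimately show ?thesis using closed_Int[OF hull_closed] by metis
qed

lemma F_cont_comp: "continuous_on S g \<Longrightarrow> continuous_on S (\<lambda>x. F (g x))"
  using continuous_on_compose2[OF F_cont, of S g] by auto

lemma Gq_cont_on:
  assumes d: "0 < \<delta>"
  shows "continuous_on {x \<in> simplex_hull. \<forall>y. \<delta> \<le> x $ y} Gq"
proof -
  define S where "S = {x \<in> (simplex_hull :: (real^'y) set). \<forall>y. \<delta> \<le> x $ y}"
  have SP: "S \<subseteq> Pplus" using d by (auto simp: S_def Pplus_def simplex_hull_def intro: less_le_trans)
  define T where "T = simplex_dir \<inter> cball (0::real^'y) (2 * F 0 / \<delta>)"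
  have cT: "compact T" unfolding T_def by (intro closed_Int_compact dir_closed compact_cball)
  have GT: "Gq \<in> S \<rightarrow> T"
  proof
    fix x assume x: "x \<in> S"
    then have xP: "x \<in> Pplus" using SP by auto
    have "norm (Gq x) \<le> 2 * F 0 / \<delta>" by (rule Gq_bound[OF xP d]) (use x in \<open>auto simp: S_def\<close>)
    then show "Gq x \<in> T" using Gq_prop(1)[OF xP] by (simp add: T_def)
  qed
  have graph: "(\<lambda>x. (x, Gq x)) ` S = (S \<times> simplex_dir) \<inter> {p. \<forall>s'. phi (fst p) s' \<le> phi (fst p) (snd p)}"
  proof safe
    fix x assume "x \<in> S" then have "x \<in> Pplus" using SP by auto
    then show "Gq x \<in> simplex_dir" "phi (fst (x, Gq x)) s' \<le> phi (fst (x, Gq x)) (snd (x, Gq x))" for s'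
      using Gq_prop by auto
  next
    fix x s assume "x \<in> S" "s \<in> simplex_dir" "\<forall>s'. phi (fst (x, s)) s' \<le> phi (fst (x, s)) (snd (x, s))"
    then have "Gq x = s" using SP by (intro Gq_eq) auto
    then show "(x, s) \<in> (\<lambda>x. (x, Gq x)) ` S" using \<open>x \<in> S\<close> by auto
  qed
  have cS: "closed S"
  proof -
    have "S = simplex_hull \<inter> {x :: real^'y. \<forall>y. \<delta> \<le> x $ y}" by (auto simp: S_def)
    moreover have "closed {x :: real^'y. \<forall>y. \<delta> \<le> x $ y}"
      by (intro closed_Collect_all closed_Collect_le continuous_intros)
    ultimately show ?thesis using closed_Int[OF hull_closed] by metis
  qed
  have "closed {p :: (real^'y) \<times> (real^'y). \<forall>s'. phi (fst p) s' \<le> phi (fst p) (snd p)}"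
    unfolding phi_def
    by (intro closed_Collect_all closed_Collect_le continuous_intros F_cont_comp)
  then have "closed ((\<lambda>x. (x, Gq x)) ` S)"
    unfolding graph by (intro closed_Int closed_Times cS dir_closed)
  then show ?thesis unfolding S_def[symmetric] by (rule continuous_from_closed_graph[OF cT GT])
qed

lemma at_hull_eq:
  assumes q: "q \<in> Pplus"
  shows "at q within simplex_hull = at q within {x \<in> simplex_hull. \<forall>y. mq q / 2 \<le> x $ y}"
proof (rule at_within_nhd[of _ "ball q (mq q / 2)"])
  show "q \<in> ball q (mq q / 2)" using mq_pos[OF q] by simp
  show "simplex_hull \<inter> ball q (mq q / 2) - {q} = {x \<in> simplex_hull. \<forall>y. mq q / 2 \<le> x $ y} \<inter> ball q (mq q / 2) - {q}"
  proof safe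
    fix x y assume x: "x \<in> simplex_hull" "x \<in> ball q (mq q / 2)"
    have "\<bar>(q - x) $ y\<bar> \<le> norm (q - x)" by (rule component_le_norm_cart)
    also have "\<dots> < mq q / 2" using x by (simp add: dist_norm)
    finally have "\<bar>q $ y - x $ y\<bar> < mq q / 2" by simp
    then have "q $ y - x $ y < mq q / 2" using abs_ge_self[of "q $ y - x $ y"] by linarith
    then show "mq q / 2 \<le> x $ y" using mq_le[of q y] by simp
  qed
qed simp

lemma Gq_tendsto:
  assumes q: "q \<in> Pplus"
  shows "(Gq \<longlongrightarrow> Gq q) (at q within simplex_hull)"
proof -
  define S where "S = {x \<in> (simplex_hull :: (real^'y) set). \<forall>y. mq q / 2 \<le> x $ y}"
  have "continuous_on S Gq" unfolding S_def by (rule Gq_cont_on) (use mq_pos[OF q] in simp)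
  moreover have "q \<in> S"
  proof -
    have "mq q / 2 \<le> q $ y" for y using mq_le[of q y] mq_pos[OF q] by linarith
    then show ?thesis using q by (auto simp: S_def Pplus_def simplex_hull_def)
  qed
  ultimately have "(Gq \<longlongrightarrow> Gq q) (at q within S)" by (simp add: continuous_on_def)
  then show ?thesis by (simp add: at_hull_eq[OF q] S_def)
qed

lemma event_Pplus:
  assumes q: "q \<in> Pplus"
  shows "eventually (\<lambda>x. x \<in> Pplus) (at q within simplex_hull)"
proof -
  have "eventually (\<lambda>x. x \<in> {x \<in> simplex_hull. \<forall>y. mq q / 2 \<le> x $ y}) (at q within {x \<in> simplex_hull. \<forall>y. mq q / 2 \<le> x $ y})"
    using eventually_at_ball'[of 1 q "{x \<in> simplex_hull. \<forall>y. mq q / 2 \<le> x $ y}"] by (rule eventually_mono) auto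
  then have "eventually (\<lambda>x. x \<in> {x \<in> simplex_hull. \<forall>y. mq q / 2 \<le> x $ y}) (at q within simplex_hull)"
    by (simp add: at_hull_eq[OF q])
  then show ?thesis
  proof (rule eventually_mono)
    fix x :: "real^'y" assume x: "x \<in> {x \<in> simplex_hull. \<forall>y. mq q / 2 \<le> x $ y}"
    have "0 < x $ y" for y using x mq_pos[OF q] by (auto dest: spec[of _ y])
    then show "x \<in> Pplus" using x by (auto simp: Pplus_def simplex_hull_def)
  qed
qed

lemma om_deriv:
  assumes q: "q \<in> Pplus"
  shows "(om has_derivative (\<lambda>h. Gq q \<bullet> h)) (at q within simplex_hull)"
  unfolding has_derivative_iff_norm
proof (intro conjI bounded_linear_inner_right)
  have key: "norm (om y - om q - Gq q \<bullet> (y - q)) / norm (y - q) \<le> norm (Gq y - Gq q)" if y: "y \<in> Pplus" for y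
  proof -
    have a: "om q + Gq q \<bullet> (y - q) \<le> om y"
      using Gq_prop(2)[OF y, of "Gq q"] by (simp add: om_eq q y phi_def inner_diff_right inner_diff_left inner_commute)
    have b: "om y - Gq y \<bullet> (y - q) \<le> om q"
      using Gq_prop(2)[OF q, of "Gq y"] by (simp add: om_eq q y phi_def inner_diff_right inner_diff_left inner_commute)
    have "\<bar>om y - om q - Gq q \<bullet> (y - q)\<bar> \<le> (Gq y - Gq q) \<bullet> (y - q)"
      using a b by (simp add: inner_diff_left)
    also have "\<dots> \<le> norm (Gq y - Gq q) * norm (y - q)"
      using Cauchy_Schwarz_ineq2[of "Gq y - Gq q" "y - q"] by simp
    finally have c: "\<bar>om y - om q - Gq q \<bullet> (y - q)\<bar> \<le> norm (Gq y - Gq q) * norm (y - q)" .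
    show ?thesis
    proof (cases "y = q")
      case True then show ?thesis by simp
    next
      case False then have "0 < norm (y - q)" by simp
      then show ?thesis using c by (simp add: divide_le_eq)
    qed
  qed
  have "((\<lambda>y. Gq y - Gq q) \<longlongrightarrow> 0) (at q within simplex_hull)"
    using Gq_tendsto[OF q] by (simp add: LIM_zero)
  then have t: "((\<lambda>y. norm (Gq y - Gq q)) \<longlongrightarrow> 0) (at q within simplex_hull)"
    by (rule tendsto_norm_zero)
  show "((\<lambda>y. norm (om y - om q - Gq q \<bullet> (y - q)) / norm (y - q)) \<longlongrightarrow> 0) (at q within simplex_hull)"
  proof (rule Lim_null_comparison[OF _ t])
    show "\<forall>\<^sub>F y in at q within simplex_hull. norm (norm (om y - om q - Gq q \<bullet> (y - q)) / norm (y - q)) \<le> norm (Gq y - Gq q)"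
      using event_Pplus[OF q] by eventually_elim (use key in simp)
  qed
qed

lemma blowup:
  assumes b: "b \<in> closure Pplus - Pplus"
  shows "filterlim (\<lambda>x. norm (Gq x)) at_top (at b within Pplus)"
  unfolding filterlim_at_top
proof
  fix Z :: real
  have "closure Pplus \<subseteq> prob_simplex"
    by (rule closure_minimal) (auto intro: Pplus_simplex simplex_closed)
  then have bs: "b \<in> prob_simplex" using b by auto
  have "\<exists>y. b $ y \<le> 0"
  proof (rule ccontr)
    assume "\<not> ?thesis"
    then have "b \<in> Pplus" using bs by (auto simp: Pplus_def prob_simplex_def not_le)
    then show False using b by simp
  qed
  then obtain y where y: "b $ y \<le> 0" by blast
  define R where "R = max Z 0"
  define p where "p = measure G (Ebox y (2 * R))"
  have p: "0 < p" unfolding p_def by (rule Ebox_pos)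
  have "\<forall>\<^sub>F x in at b within Pplus. x \<in> ball b p \<and> x \<noteq> b \<and> x \<in> Pplus" by (rule eventually_at_ball'[OF p])
  then show "\<forall>\<^sub>F x in at b within Pplus. Z \<le> norm (Gq x)"
  proof (rule eventually_mono)
    fix x assume x: "x \<in> ball b p \<and> x \<noteq> b \<and> x \<in> Pplus"
    show "Z \<le> norm (Gq x)"
    proof (rule ccontr)
      assume "\<not> Z \<le> norm (Gq x)"
      then have "norm (Gq x) \<le> R" by (simp add: R_def)
      then have "p \<le> D (Gq x) $ y" unfolding p_def by (rule D_lower)
      also have "\<dots> = x $ y" using Gq_D x by simp
      also have "\<dots> \<le> b $ y + \<bar>(x - b) $ y\<bar>" by simp
      also have "\<bar>(x - b) $ y\<bar> \<le> norm (x - b)" by (rule component_le_norm_cart)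
      also have "norm (x - b) < p" using x by (simp add: dist_norm norm_minus_commute)
      finally show False using y by simp
    qed
  qed
qed

lemma legendre: "legendre_on simplex_hull simplex_dir (fenchel_conj F)"
proof -
  have Dset: "{x \<in> simplex_hull. fenchel_conj F x \<noteq> \<infinity>} = prob_simplex"
    using fenchel_dom by (auto simp: simplex_hull_def prob_simplex_def)
  have ne: "Pplus \<noteq> {}"
  proof -
    have "(1 / real CARD('y)) *\<^sub>R (1::real^'y) \<in> Pplus" by (simp add: Pplus_def)
    then show ?thesis by blast
  qed
  have fin: "\<forall>x\<in>Pplus. \<bar>fenchel_conj F x\<bar> \<noteq> \<infinity>" by (simp add: Omega_eq)
  have sc: "strictly_convex_on Pplus (\<lambda>x. real_of_ereal (fenchel_conj F x))"
    using om_strict by (simp add: om_def[abs_def])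
  have gr: "\<forall>x\<in>Pplus. Gq x \<in> simplex_dir \<and>
      ((\<lambda>x. real_of_ereal (fenchel_conj F x)) has_derivative (\<lambda>h. Gq x \<bullet> h)) (at x within simplex_hull)"
    using Gq_prop(1) om_deriv by (simp add: om_def[abs_def])
  show ?thesis
    unfolding legendre_on_def Let_def Dset interior_Pplus
    using ne fin sc gr blowup by blast
qed

end

theorem theorem3:
  fixes Y :: "'y::finite \<Rightarrow> real ^ 'd::finite" and eps :: real
  assumes no_conv: "\<And>y. Y y \<notin> convex hull (Y ` (UNIV - {y}))"
    and eps_pos: "eps > 0"
  defines "F \<equiv> Fpert eps Y"
  shows
    "(convex_on UNIV F \<and> (\<exists>L. L-lipschitz_on UNIV F)) \<and>
    (strictly_convex_on simplex_dir F \<and>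
     (\<forall>x\<in>span {1}. \<forall>x'\<in>span {1}. \<forall>u::real.
         F (u *\<^sub>R x + (1 - u) *\<^sub>R x') = u * F x + (1 - u) * F x') \<and>
     (\<forall>s q0. q0 \<in> prob_simplex \<longrightarrow>
        F s = (proj_ones s) \<bullet> q0 + F (s - proj_ones s))) \<and>
    (\<forall>s. (AE z in std_gauss. \<exists>!q. q \<in> prob_simplex \<and>
              (\<forall>q'\<in>prob_simplex. pert_obj eps Y s z q' \<le> pert_obj eps Y s z q)) \<and>
         (F has_derivative
            (\<lambda>h. (\<integral>z. (THE q. q \<in> prob_simplex \<and>
                     (\<forall>q'\<in>prob_simplex. pert_obj eps Y s z q' \<le> pert_obj eps Y s z q)) \<partial>std_gauss) \<bullet> h))
          (at s)) \<and>
    ({q. fenchel_conj F q \<noteq> \<infinity>} = prob_simplex \<and>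
     legendre_on simplex_hull simplex_dir (fenchel_conj F))"
proof -
  interpret P: pm Y eps using no_conv eps_pos by unfold_locales
  have p1: "convex_on UNIV F \<and> (\<exists>L. L-lipschitz_on UNIV F)"
    unfolding F_def using F_conv F_lipschitz by blast
  have p2: "strictly_convex_on simplex_dir F \<and>
     (\<forall>x\<in>span {1}. \<forall>x'\<in>span {1}. \<forall>u::real.
         F (u *\<^sub>R x + (1 - u) *\<^sub>R x') = u * F x + (1 - u) * F x') \<and>
     (\<forall>s q0. q0 \<in> prob_simplex \<longrightarrow>
        F s = (proj_ones s) \<bullet> q0 + F (s - proj_ones s))"
    unfolding F_def using P.F_strict F_affine_span F_proj by blast
  have p3: "\<forall>s. (AE z in std_gauss. \<exists>!q. q \<in> prob_simplex \<and>
              (\<forall>q'\<in>prob_simplex. pert_obj eps Y s z q' \<le> pert_obj eps Y s z q)) \<and>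
         (F has_derivative
            (\<lambda>h. (\<integral>z. (THE q. q \<in> prob_simplex \<and>
                     (\<forall>q'\<in>prob_simplex. pert_obj eps Y s z q' \<le> pert_obj eps Y s z q)) \<partial>std_gauss) \<bullet> h))
          (at s)"
    unfolding F_def using P.uniq_AE P.F_deriv unfolding P.Q_def by blast
  have p4: "{q. fenchel_conj F q \<noteq> \<infinity>} = prob_simplex \<and>
     legendre_on simplex_hull simplex_dir (fenchel_conj F)"
    unfolding F_def using P.fenchel_dom P.legendre by blast
  show ?thesis using p1 p2 p3 p4 by blast
qed

end
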